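(* Let $R\subseteq S$, $\sigma$ be as in the context, $n=n_1+\cdots+n_\ell$. Let $\mathbf{a}=(a_1,\ldots,a_\ell)\in(S^* )^\ell$ and $\beta_{i,j}\in S$ ($1\le i\le\ell$, $1\le j\le n_i$) satisfy: (i) $a_i-a_j^\beta\in S^*$ for all $\beta\in S^*$ and $1\le i<j\le\ell$; (ii) for each $i$, $\beta_{i,1},\ldots,\beta_{i,n_i}$ are $R$-linearly independent. Let $b_{i,j}=\sigma(\beta_{i,j})a_i\beta_{i,j}^{-1}$. Fix $1\le k\le n-1$ and $t=\lfloor (n-k)/2\rfloor$. Let $\mathbf{c}\in\mathcal{C}_k(\mathbf{a},\boldsymbol\beta)$, let $\mathbf{e}\in S^n$ with ${\rm wt}_{SR}(\mathbf{e})\le t$, and $\mathbf{r}=\mathbf{c}+\mathbf{e}$, with coordinates $c_{i,j},r_{i,j}$. Let $F,H\in S[x;\sigma]$ be the unique skew polynomials of degree less than $n$ with $F(b_{i,j})=c_{i,j}\beta_{i,j}^{-1}$ and $H(b_{i,j})=r_{i,j}\beta_{i,j}^{-1}$ for all $i,j$. If $L,Q\in S[x;\sigma]$ are such that $L$ is monic, $\deg(L)\le t$, $\deg(Q)\le t+k-1$, and $(LH)(b_{i,j})=Q(b_{i,j})$ for all $1\le j\le n_i$, $1\le i\le\ell$, then $Q=LF$.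
   Context: $R$ is a finite commutative chain ring with maximal ideal $\mathfrak{m}$, $q=|R/\mathfrak{m}|$; $S=R[x]/(h)$ with $h$ monic of degree $m$ irreducible modulo $\mathfrak{m}$, local with maximal ideal $\mathfrak{M}=\mathfrak{m}S$ and unit group $S^*=S\setminus\mathfrak{M}$. $\sigma$ is a ring automorphism of $S$ generating the Galois group of $R\subseteq S$, with fixed ring $R$, reducing modulo $\mathfrak{M}$ to $y\mapsto y^q$. $S[x;\sigma]$ is the skew polynomial ring with $xa=\sigma(a)x$. Remainder evaluation: for $P\in S[x;\sigma]$ and $b\in S$, $P(b)$ is the unique $c\in S$ with $P=Q'(x-b)+c$ for some $Q'\in S[x;\sigma]$. For $a\in S$, $\beta\in S^*$: $a^\beta=\sigma(\beta)a\beta^{-1}$; $N_s(a)=\sigma^{s-1}(a)\cdots a$, $\mathcal{D}_a^s(\beta)=\sigma^s(\beta)N_s(a)$. The linearized Reed–Solomon code $\mathcal{C}_k(\mathbf{a},\boldsymbol\beta)\subseteq S^n$ is the $S$-row span of the $k\times n$ matrix with rows $s=0,\ldots,k-1$ and columns $(i,j)$ (ordered $(1,1),\ldots,(1,n_1),\ldots,(\ell,n_\ell)$), entry $\mathcal{D}_{a_i}^s(\beta_{i,j})$. Sum-rank weight: for $\mathbf{u}\in S^s$, ${\rm rk}(\mathbf{u})$ is the number of nonzero diagonal entries of the Smith normal form over $R$ of the $m\times s$ coordinate matrix of $\mathbf{u}$ in an $R$-basis of $S$; for $\mathbf{e}=(\mathbf{e}^{(1)},\ldots,\mathbf{e}^{(\ell)})$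 with $\mathbf{e}^{(i)}\in S^{n_i}$, ${\rm wt}_{SR}(\mathbf{e})=\sum_i{\rm rk}(\mathbf{e}^{(i)})$. *)

theory Defs
  imports "HOL-Computational_Algebra.Polynomial"
begin

(* The ring S is modelled as the whole (finite) type 'a; R is a subset of it. *)

definition is_unit_in :: "'a set \<Rightarrow> 'a::comm_ring_1 \<Rightarrow> bool" where
  "is_unit_in R x \<longleftrightarrow> x \<in> R \<and> (\<exists>y\<in>R. x * y = 1)"

definition nonunits :: "'a::comm_ring_1 set \<Rightarrow> 'a set" where
  "nonunits R = {x \<in> R. \<not> is_unit_in R x}"

definition ring_ideal :: "'a::comm_ring_1 set \<Rightarrow> 'a set \<Rightarrow> bool" where
  "ring_ideal R I \<longleftrightarrow> I \<subseteq> R \<and> 0 \<in> I \<and> (\<forall>x\<in>I. \<forall>y\<in>I. x + y \<in> I)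
     \<and> (\<forall>r\<in>R. \<forall>x\<in>I. r * x \<in> I)"

definition chain_ring :: "'a::comm_ring_1 set \<Rightarrow> bool" where
  "chain_ring R \<longleftrightarrow> (0::'a) \<noteq> 1 \<and>
     (\<forall>I J. ring_ideal R I \<longrightarrow> ring_ideal R J \<longrightarrow> I \<subseteq> J \<or> J \<subseteq> I)"

definition ring_automorphism :: "('a::comm_ring_1 \<Rightarrow> 'a) \<Rightarrow> bool" where
  "ring_automorphism f \<longleftrightarrow> bij f \<and> (\<forall>x y. f (x + y) = f x + f y)
     \<and> (\<forall>x y. f (x * y) = f x * f y) \<and> f 1 = 1"

definition residue_card :: "'a::comm_ring_1 set \<Rightarrow> nat" where
  "residue_card R = card R div card (nonunits R)"

definition inv_S :: "'a::comm_ring_1 \<Rightarrow> 'a" where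
  "inv_S b = (THE y. b * y = 1)"

(* skew polynomials S[x;sigma], represented by their coefficient sequences;
   multiplication: (a x^i)(b x^j) = a sigma^i(b) x^(i+j) *)
definition skew_mult :: "('a::comm_ring_1 \<Rightarrow> 'a) \<Rightarrow> 'a poly \<Rightarrow> 'a poly \<Rightarrow> 'a poly" where
  "skew_mult \<sigma> p q = (\<Sum>i\<le>degree p. monom (coeff p i) i * map_poly (\<sigma> ^^ i) q)"

definition skew_eval :: "('a::comm_ring_1 \<Rightarrow> 'a) \<Rightarrow> 'a poly \<Rightarrow> 'a \<Rightarrow> 'a" where
  "skew_eval \<sigma> P b = (THE c. \<exists>Q'. P = skew_mult \<sigma> Q' [:- b, 1:] + [:c:])"

definition norm_op :: "('a::comm_ring_1 \<Rightarrow> 'a) \<Rightarrow> nat \<Rightarrow> 'a \<Rightarrow> 'a" where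
  "norm_op \<sigma> s a = (\<Prod>i<s. (\<sigma> ^^ i) a)"

definition D_op :: "('a::comm_ring_1 \<Rightarrow> 'a) \<Rightarrow> 'a \<Rightarrow> nat \<Rightarrow> 'a \<Rightarrow> 'a" where
  "D_op \<sigma> a s \<beta> = (\<sigma> ^^ s) \<beta> * norm_op \<sigma> s a"

(* membership in the linearized Reed-Solomon code C_k(a, beta); blocks i < l, positions j < nn i
   (0-based indices) *)
definition lrs_code :: "('a::comm_ring_1 \<Rightarrow> 'a) \<Rightarrow> nat \<Rightarrow> nat \<Rightarrow> (nat \<Rightarrow> nat)
    \<Rightarrow> (nat \<Rightarrow> 'a) \<Rightarrow> (nat \<Rightarrow> nat \<Rightarrow> 'a) \<Rightarrow> (nat \<Rightarrow> nat \<Rightarrow> 'a) \<Rightarrow> bool" where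
  "lrs_code \<sigma> k l nn a \<beta> c \<longleftrightarrow>
     (\<exists>u :: nat \<Rightarrow> 'a. \<forall>i<l. \<forall>j<nn i. c i j = (\<Sum>s<k. u s * D_op \<sigma> (a i) s (\<beta> i j)))"

(* matrices as functions; p = inner dimension *)
definition mat_mult :: "nat \<Rightarrow> (nat \<Rightarrow> nat \<Rightarrow> 'a::comm_ring_1) \<Rightarrow> (nat \<Rightarrow> nat \<Rightarrow> 'a) \<Rightarrow> nat \<Rightarrow> nat \<Rightarrow> 'a" where
  "mat_mult p A B = (\<lambda>i j. \<Sum>l<p. A i l * B l j)"

definition R_invertible :: "'a::comm_ring_1 set \<Rightarrow> nat \<Rightarrow> (nat \<Rightarrow> nat \<Rightarrow> 'a) \<Rightarrow> bool" where
  "R_invertible R d P \<longleftrightarrow> (\<forall>i<d. \<forall>j<d. P i j \<in> R) \<and>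
     (\<exists>P'. (\<forall>i<d. \<forall>j<d. P' i j \<in> R) \<and>
        (\<forall>i<d. \<forall>j<d. mat_mult d P P' i j = (if i = j then 1 else 0)) \<and>
        (\<forall>i<d. \<forall>j<d. mat_mult d P' P i j = (if i = j then 1 else 0)))"

definition R_basis :: "'a::comm_ring_1 set \<Rightarrow> nat \<Rightarrow> (nat \<Rightarrow> 'a) \<Rightarrow> bool" where
  "R_basis R m w \<longleftrightarrow> (\<forall>s. \<exists>!r. (\<forall>i<m. r i \<in> R) \<and> (\<forall>i\<ge>m. r i = 0) \<and> s = (\<Sum>i<m. r i * w i))"

definition coord :: "'a::comm_ring_1 set \<Rightarrow> nat \<Rightarrow> (nat \<Rightarrow> 'a) \<Rightarrow> 'a \<Rightarrow> nat \<Rightarrow> 'a" where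
  "coord R m w s = (THE r. (\<forall>i<m. r i \<in> R) \<and> (\<forall>i\<ge>m. r i = 0) \<and> s = (\<Sum>i<m. r i * w i))"

(* rk(u) for u = (u_0..u_(s-1)) in S^s: number of nonzero diagonal entries of the Smith normal form
   over R of the m x s coordinate matrix of u in an R-basis of S *)
definition snf_rank :: "'a::comm_ring_1 set \<Rightarrow> (nat \<Rightarrow> 'a) \<Rightarrow> nat \<Rightarrow> nat" where
  "snf_rank R u s = (SOME r. \<exists>m w P Q D.
      R_basis R m w \<and> R_invertible R m P \<and> R_invertible R s Q \<and>
      (\<forall>i<m. \<forall>j<s. D i j =
          mat_mult s (mat_mult m P (\<lambda>i' l. coord R m w (u l) i')) Q i j) \<and>
      (\<forall>i<m. \<forall>j<s. i \<noteq> j \<longrightarrow> D i j = 0) \<and>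
      (\<forall>i. i + 1 < min m s \<longrightarrow> (\<exists>x\<in>R. D (i + 1) (i + 1) = x * D i i)) \<and>
      r = card {i. i < min m s \<and> D i i \<noteq> 0})"

definition sum_rank_wt :: "'a::comm_ring_1 set \<Rightarrow> nat \<Rightarrow> (nat \<Rightarrow> nat) \<Rightarrow> (nat \<Rightarrow> nat \<Rightarrow> 'a) \<Rightarrow> nat" where
  "sum_rank_wt R l nn e = (\<Sum>i<l. snf_rank R (\<lambda>j. e i j) (nn i))"

end

theory Submission
  imports Defs
begin

locale skew =
  fixes \<sigma> :: "'a::comm_ring_1 \<Rightarrow> 'a"
  assumes aut: "ring_automorphism \<sigma>"
begin

lemma s_add: "\<sigma> (x + y) = \<sigma> x + \<sigma> y" using aut unfolding ring_automorphism_def by blast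
lemma s_mult: "\<sigma> (x * y) = \<sigma> x * \<sigma> y" using aut unfolding ring_automorphism_def by blast
lemma s_one: "\<sigma> 1 = 1" using aut unfolding ring_automorphism_def by blast
lemma s_bij: "bij \<sigma>" using aut unfolding ring_automorphism_def by blast
lemma s_zero: "\<sigma> 0 = 0"
proof -
  have "\<sigma> (0 + 0) = \<sigma> 0 + \<sigma> 0" by (rule s_add)
  then show ?thesis by simp
qed
lemma s_minus: "\<sigma> (- x) = - \<sigma> x"
proof -
  have "\<sigma> (x + - x) = \<sigma> x + \<sigma> (- x)" by (rule s_add)
  then have "\<sigma> x + \<sigma> (- x) = 0" by (simp add: s_zero)
  then show ?thesis by (simp add: add_eq_0_iff2)
qed
lemma s_diff: "\<sigma> (x - y) = \<sigma> x - \<sigma> y"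
  using s_add[of x "- y"] s_minus[of y] by simp

lemma sp_add: "(\<sigma>^^i) (x + y) = (\<sigma>^^i) x + (\<sigma>^^i) y"
  by (induction i) (auto simp: s_add)
lemma sp_mult: "(\<sigma>^^i) (x * y) = (\<sigma>^^i) x * (\<sigma>^^i) y"
  by (induction i) (auto simp: s_mult)
lemma sp_one: "(\<sigma>^^i) 1 = 1"
  by (induction i) (auto simp: s_one)
lemma sp_zero: "(\<sigma>^^i) 0 = 0"
  by (induction i) (auto simp: s_zero)
lemma sp_minus: "(\<sigma>^^i) (- x) = - (\<sigma>^^i) x"
  by (induction i) (auto simp: s_minus)
lemma sp_diff: "(\<sigma>^^i) (x - y) = (\<sigma>^^i) x - (\<sigma>^^i) y"
  by (induction i) (auto simp: s_diff)
lemma sp_sum: "(\<sigma>^^i) (\<Sum>j\<in>A. f j) = (\<Sum>j\<in>A. (\<sigma>^^i) (f j))"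
  by (induction A rule: infinite_finite_induct) (auto simp: sp_zero sp_add)
lemma sp_prod: "(\<sigma>^^i) (\<Prod>j\<in>A. f j) = (\<Prod>j\<in>A. (\<sigma>^^i) (f j))"
  by (induction A rule: infinite_finite_induct) (auto simp: sp_one sp_mult)
lemma sp_comp: "(\<sigma>^^i) ((\<sigma>^^j) x) = (\<sigma>^^(i+j)) x"
  by (simp add: funpow_add)

lemma norm_op_Suc: "norm_op \<sigma> (Suc s) a = norm_op \<sigma> s a * (\<sigma>^^s) a"
  by (simp add: norm_op_def)
lemma norm_op_0[simp]: "norm_op \<sigma> 0 a = 1"
  by (simp add: norm_op_def)
lemma norm_op_add: "norm_op \<sigma> (i + j) a = norm_op \<sigma> i a * (\<sigma>^^i) (norm_op \<sigma> j a)"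
proof (induction j)
  case 0 then show ?case by (simp add: sp_one)
next
  case (Suc j)
  have "norm_op \<sigma> (i + Suc j) a = norm_op \<sigma> (i + j) a * (\<sigma>^^(i+j)) a"
    using norm_op_Suc[of "i+j" a] by simp
  also have "\<dots> = norm_op \<sigma> i a * (\<sigma>^^i) (norm_op \<sigma> j a * (\<sigma>^^j) a)"
    using Suc by (simp add: sp_mult sp_comp)
  finally show ?case by (simp add: norm_op_Suc)
qed


lemma sp_fix: "\<sigma> r = r \<Longrightarrow> (\<sigma>^^i) r = r"
  by (induction i) auto

lemma coeff_skew_mult:
  "coeff (skew_mult \<sigma> p q) n = (\<Sum>i\<le>n. coeff p i * (\<sigma>^^i) (coeff q (n - i)))"
proof -
  define g where "g i = (if i \<le> n then coeff p i * (\<sigma>^^i) (coeff q (n - i)) else 0)" for i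
  have "coeff (skew_mult \<sigma> p q) n = (\<Sum>i\<le>degree p. g i)"
    unfolding skew_mult_def g_def
    by (simp add: coeff_sum coeff_monom_mult) (rule sum.cong, auto simp: coeff_map_poly sp_zero)
  also have "\<dots> = (\<Sum>i\<le>degree p + n. g i)"
    by (rule sum.mono_neutral_left) (auto simp: g_def coeff_eq_0)
  also have "\<dots> = (\<Sum>i\<le>n. g i)"
    by (rule sum.mono_neutral_right) (auto simp: g_def)
  also have "\<dots> = (\<Sum>i\<le>n. coeff p i * (\<sigma>^^i) (coeff q (n - i)))"
    by (rule sum.cong) (auto simp: g_def)
  finally show ?thesis .
qed

lemma skew_mult_add1: "skew_mult \<sigma> (p + p') q = skew_mult \<sigma> p q + skew_mult \<sigma> p' q"
  by (rule poly_eqI) (simp add: coeff_skew_mult sum.distrib ring_distribs)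
lemma skew_mult_diff1: "skew_mult \<sigma> (p - p') q = skew_mult \<sigma> p q - skew_mult \<sigma> p' q"
  by (rule poly_eqI) (simp add: coeff_skew_mult sum_subtractf ring_distribs)
lemma skew_mult_0[simp]: "skew_mult \<sigma> 0 q = 0"
  by (rule poly_eqI) (simp add: coeff_skew_mult)

lemma degree_skew_mult: "degree (skew_mult \<sigma> p q) \<le> degree p + degree q"
proof (rule degree_le, intro allI impI)
  fix n assume n: "degree p + degree q < n"
  have "\<And>i. i \<le> n \<Longrightarrow> coeff p i * (\<sigma>^^i) (coeff q (n - i)) = 0"
  proof -
    fix i assume "i \<le> n"
    show "coeff p i * (\<sigma>^^i) (coeff q (n - i)) = 0"
    proof (cases "i \<le> degree p")
      case True
      then have "degree q < n - i" using n by linarith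
      then show ?thesis by (simp add: coeff_eq_0 sp_zero)
    next
      case False then show ?thesis by (simp add: coeff_eq_0)
    qed
  qed
  then show "coeff (skew_mult \<sigma> p q) n = 0" by (simp add: coeff_skew_mult)
qed

end

definition Phi :: "('a::comm_ring_1 \<Rightarrow> 'a) \<Rightarrow> 'a poly \<Rightarrow> 'a \<Rightarrow> 'a \<Rightarrow> 'a" where
  "Phi \<sigma> P a g = (\<Sum>s<Suc (degree P). coeff P s * (\<sigma>^^s) g * norm_op \<sigma> s a)"

context skew begin

lemma Phi_bound: "degree P < K \<Longrightarrow> Phi \<sigma> P a g = (\<Sum>s<K. coeff P s * (\<sigma>^^s) g * norm_op \<sigma> s a)"
  unfolding Phi_def
  by (rule sum.mono_neutral_left) (auto simp: coeff_eq_0)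

lemma Phi_add: "Phi \<sigma> (P + Q) a g = Phi \<sigma> P a g + Phi \<sigma> Q a g"
proof -
  define K where "K = Suc (degree P + degree Q)"
  have "degree (P + Q) < K" unfolding K_def using degree_add_le_max[of P Q] by linarith
  moreover have "degree P < K" "degree Q < K" unfolding K_def by auto
  ultimately show ?thesis by (simp add: Phi_bound[of _ K] sum.distrib ring_distribs)
qed

lemma Phi_diff: "Phi \<sigma> (P - Q) a g = Phi \<sigma> P a g - Phi \<sigma> Q a g"
proof -
  define K where "K = Suc (degree P + degree Q)"
  have "degree (P - Q) < K" unfolding K_def using degree_diff_le_max[of P Q] by linarith
  moreover have "degree P < K" "degree Q < K" unfolding K_def by auto
  ultimately show ?thesis by (simp add: Phi_bound[of _ K] sum_subtractf ring_distribs)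
qed

lemma Phi_0[simp]: "Phi \<sigma> 0 a g = 0"
  by (simp add: Phi_def)

lemma Phi_g0[simp]: "Phi \<sigma> P a 0 = 0"
  by (simp add: Phi_def sp_zero)

lemma Phi_add_g: "Phi \<sigma> P a (g + h) = Phi \<sigma> P a g + Phi \<sigma> P a h"
  by (simp add: Phi_def sp_add sum.distrib ring_distribs)

lemma Phi_diff_g: "Phi \<sigma> P a (g - h) = Phi \<sigma> P a g - Phi \<sigma> P a h"
  by (simp add: Phi_def sp_diff sum_subtractf ring_distribs)

lemma Phi_scal: "\<sigma> r = r \<Longrightarrow> Phi \<sigma> P a (r * g) = r * Phi \<sigma> P a g"
  by (simp add: Phi_def sp_mult sp_fix sum_distrib_left algebra_simps)

lemma Phi_sum_g: "Phi \<sigma> P a (\<Sum>j\<in>A. f j) = (\<Sum>j\<in>A. Phi \<sigma> P a (f j))"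
  by (induction A rule: infinite_finite_induct) (auto simp: Phi_add_g)

lemma Phi_comp: "Phi \<sigma> (skew_mult \<sigma> p q) a g = Phi \<sigma> p a (Phi \<sigma> q a g)"
proof -
  define dp where "dp = degree p"
  define dq where "dq = degree q"
  define K where "K = Suc (dp + dq)"
  define F where "F i j = coeff p i * (\<sigma>^^i) (coeff q j) * (\<sigma>^^(i+j)) g * norm_op \<sigma> (i+j) a" for i j
  have dK: "degree (skew_mult \<sigma> p q) < K" using degree_skew_mult[of p q] unfolding K_def dp_def dq_def by linarith
  have "Phi \<sigma> (skew_mult \<sigma> p q) a g = (\<Sum>n<K. (\<Sum>i\<le>n. coeff p i * (\<sigma>^^i) (coeff q (n - i))) * (\<sigma>^^n) g * norm_op \<sigma> n a)"
    by (simp add: Phi_bound[OF dK] coeff_skew_mult)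
  also have "\<dots> = (\<Sum>n<K. \<Sum>i\<le>n. F i (n - i))"
    by (rule sum.cong) (auto simp: F_def sum_distrib_right intro!: sum.cong)
  also have "\<dots> = (\<Sum>(i, j)\<in>{(i, j). i + j < K}. F i j)"
    by (rule sum.triangle_reindex[symmetric])
  also have "\<dots> = (\<Sum>(i, j)\<in>{..dp} \<times> {..dq}. F i j)"
  proof (rule sum.mono_neutral_right)
    show "finite {(i, j). i + j < K}"
    proof (rule finite_subset)
      show "{(i, j). i + j < K} \<subseteq> {..K} \<times> {..K}" by auto
    qed auto
    show "{..dp} \<times> {..dq} \<subseteq> {(i, j). i + j < K}" unfolding K_def by auto
    have "F i j = 0" if "\<not> (i \<le> dp \<and> j \<le> dq)" for i j
    proof (cases "i \<le> dp")
      case True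
      then have "dq < j" using that by simp
      then show ?thesis by (simp add: F_def dq_def coeff_eq_0 sp_zero)
    next
      case False
      then show ?thesis by (simp add: F_def dp_def coeff_eq_0)
    qed
    then show "\<forall>x\<in>{(i, j). i + j < K} - {..dp} \<times> {..dq}. (case x of (i, j) \<Rightarrow> F i j) = 0"
      by auto
  qed
  also have "\<dots> = (\<Sum>i\<le>dp. \<Sum>j\<le>dq. F i j)"
    by (rule sum.cartesian_product[symmetric])
  also have "\<dots> = Phi \<sigma> p a (Phi \<sigma> q a g)"
  proof -
    have "Phi \<sigma> p a (Phi \<sigma> q a g) = (\<Sum>i\<le>dp. coeff p i * (\<sigma>^^i) (\<Sum>j\<le>dq. coeff q j * (\<sigma>^^j) g * norm_op \<sigma> j a) * norm_op \<sigma> i a)"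
      unfolding Phi_def dp_def dq_def lessThan_Suc_atMost ..
    also have "\<dots> = (\<Sum>i\<le>dp. \<Sum>j\<le>dq. F i j)"
      by (rule sum.cong) (auto simp: F_def sp_sum sp_mult sp_comp norm_op_add sum_distrib_left sum_distrib_right algebra_simps intro!: sum.cong)
    finally show ?thesis by simp
  qed
  finally show ?thesis .
qed


lemma coeff_X: "coeff [:- b, 1:] k = (if k = 0 then - b else if k = 1 then 1 else 0)"
  by (cases k; cases "k - 1") auto

lemma coeff_skew_mult_X:
  "coeff (skew_mult \<sigma> p [:- b, 1:]) n = (if n = 0 then 0 else coeff p (n - 1)) - coeff p n * (\<sigma>^^n) b"
proof (cases n)
  case 0 then show ?thesis by (simp add: coeff_skew_mult coeff_X sp_minus)
next
  case (Suc m)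
  have z: "(\<Sum>i<m. coeff p i * (\<sigma>^^i) (coeff [:- b, 1:] (Suc m - i))) = 0"
    by (rule sum.neutral) (auto simp: coeff_X sp_zero)
  have "coeff (skew_mult \<sigma> p [:- b, 1:]) n = (\<Sum>i<m. coeff p i * (\<sigma>^^i) (coeff [:- b, 1:] (Suc m - i)))
      + coeff p m * (\<sigma>^^m) (coeff [:- b, 1:] (Suc m - m)) + coeff p (Suc m) * (\<sigma>^^(Suc m)) (coeff [:- b, 1:] 0)"
    unfolding Suc coeff_skew_mult by (simp add: lessThan_Suc_atMost[symmetric])
  also have "\<dots> = coeff p m - coeff p (Suc m) * (\<sigma>^^(Suc m)) b"
    by (simp only: z) (simp add: coeff_X sp_one sp_minus s_minus Suc_diff_le)
  finally show ?thesis using Suc by simp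
qed

lemma Phi_X: "Phi \<sigma> [:- b, 1:] a g = \<sigma> g * a - b * g"
proof -
  have "Phi \<sigma> [:- b, 1:] a g = (\<Sum>s<2. coeff [:- b, 1:] s * (\<sigma>^^s) g * norm_op \<sigma> s a)"
    by (rule Phi_bound) simp
  also have "\<dots> = \<sigma> g * a - b * g"
    by (simp add: numeral_2_eq_2 norm_op_def coeff_X)
  finally show ?thesis .
qed

lemma norm_op_conj: "\<gamma> * \<gamma>' = 1 \<Longrightarrow> norm_op \<sigma> s (\<sigma> \<gamma> * a * \<gamma>') = (\<sigma>^^s) \<gamma> * norm_op \<sigma> s a * \<gamma>'"
proof (induction s)
  case 0 then show ?case by simp
next
  case (Suc s)
  have e: "(\<sigma>^^s) \<gamma> * (\<sigma>^^s) \<gamma>' = 1" using Suc.prems sp_mult[of s \<gamma> \<gamma>'] sp_one[of s] by simp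
  have "norm_op \<sigma> (Suc s) (\<sigma> \<gamma> * a * \<gamma>') = (\<sigma>^^s) \<gamma> * norm_op \<sigma> s a * \<gamma>' * ((\<sigma>^^(Suc s)) \<gamma> * (\<sigma>^^s) a * (\<sigma>^^s) \<gamma>')"
    using Suc by (simp add: norm_op_Suc sp_mult funpow_Suc_right del: funpow.simps)
  also have "\<dots> = ((\<sigma>^^s) \<gamma> * (\<sigma>^^s) \<gamma>') * ((\<sigma>^^(Suc s)) \<gamma> * (norm_op \<sigma> s a * (\<sigma>^^s) a) * \<gamma>')"
    by (simp add: algebra_simps)
  also have "\<dots> = (\<sigma>^^(Suc s)) \<gamma> * norm_op \<sigma> (Suc s) a * \<gamma>'"
    by (simp only: e norm_op_Suc) simp
  finally show ?case .
qed

lemma Phi_conj: "\<gamma> * \<gamma>' = 1 \<Longrightarrow> Phi \<sigma> P (\<sigma> \<gamma> * a * \<gamma>') 1 * \<gamma> = Phi \<sigma> P a \<gamma>"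
  unfolding Phi_def sum_distrib_right
proof (rule sum.cong)
  fix s assume g: "\<gamma> * \<gamma>' = 1"
  have "coeff P s * (\<sigma>^^s) 1 * norm_op \<sigma> s (\<sigma> \<gamma> * a * \<gamma>') * \<gamma>
     = coeff P s * (\<sigma>^^s) \<gamma> * norm_op \<sigma> s a * (\<gamma> * \<gamma>')"
    by (simp only: norm_op_conj[OF g] sp_one) (simp add: algebra_simps)
  then show "coeff P s * (\<sigma>^^s) 1 * norm_op \<sigma> s (\<sigma> \<gamma> * a * \<gamma>') * \<gamma> = coeff P s * (\<sigma>^^s) \<gamma> * norm_op \<sigma> s a"
    using g by simp
qed simp

lemma div_exists: "\<exists>Q'. P = skew_mult \<sigma> Q' [:- b, 1:] + [:Phi \<sigma> P b 1:]"
proof (induction "degree P" arbitrary: P rule: less_induct)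
  case less
  show ?case
  proof (cases "degree P = 0")
    case True
    then have P: "P = [:coeff P 0:]" by (metis degree_eq_zeroE coeff_pCons_0)
    have "Phi \<sigma> P b 1 = coeff P 0" unfolding Phi_def True by simp
    then show ?thesis by (rule_tac x=0 in exI) (simp, rule P)
  next
    case False
    define d where "d = degree P"
    have d0: "d \<noteq> 0" using False d_def by simp
    define M where "M = monom (lead_coeff P) (d - 1)"
    define P1 where "P1 = P - skew_mult \<sigma> M [:- b, 1:]"
    have "degree P1 \<le> d - 1"
    proof (rule degree_le, intro allI impI)
      fix n assume "d - 1 < n"
      then have n: "d \<le> n" "n \<noteq> 0" "n \<noteq> d - 1" using False d_def by auto
      show "coeff P1 n = 0"
      proof (cases "n = d")
        case True
        then show ?thesis using n False unfolding P1_def M_def d_def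
          by (simp add: coeff_skew_mult_X coeff_monom)
      next
        case False
        then have "d < n" using n by simp
        then have "n - 1 \<noteq> d - 1" using n d0 by arith
        then show ?thesis using n \<open>d < n\<close> unfolding P1_def M_def
          by (simp add: coeff_skew_mult_X coeff_monom coeff_eq_0 d_def)
      qed
    qed
    then have "degree P1 < degree P" using False d_def by linarith
    then obtain Q1 where Q1: "P1 = skew_mult \<sigma> Q1 [:- b, 1:] + [:Phi \<sigma> P1 b 1:]"
      using less by blast
    have "Phi \<sigma> (skew_mult \<sigma> M [:- b, 1:]) b 1 = 0"
      by (simp add: Phi_comp Phi_X s_one)
    then have "Phi \<sigma> P b 1 = Phi \<sigma> P1 b 1"
      unfolding P1_def by (simp add: Phi_diff)
    moreover have "P = skew_mult \<sigma> (Q1 + M) [:- b, 1:] + [:Phi \<sigma> P1 b 1:]"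
      using Q1 unfolding P1_def by (simp add: skew_mult_add1 algebra_simps)
    ultimately show ?thesis by metis
  qed
qed

lemma coeff_skew_mult_X_top:
  assumes "D \<noteq> 0"
  shows "coeff (skew_mult \<sigma> D [:- b, 1:]) (Suc (degree D)) = lead_coeff D"
  by (simp add: coeff_skew_mult_X coeff_eq_0)

lemma div_unique:
  assumes "skew_mult \<sigma> Q1 [:- b, 1:] + [:c:] = skew_mult \<sigma> Q2 [:- b, 1:] + [:c':]"
  shows "c = c'"
proof -
  define D where "D = Q1 - Q2"
  have e: "skew_mult \<sigma> D [:- b, 1:] = [:c' - c:]"
    unfolding D_def skew_mult_diff1 using assms
    by (metis (no_types, lifting) add_diff_cancel_left' add_diff_eq diff_add_cancel diff_pCons diff_zero pCons_0_0)
  have "D = 0"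
  proof (rule ccontr)
    assume "D \<noteq> 0"
    then have "coeff (skew_mult \<sigma> D [:- b, 1:]) (Suc (degree D)) \<noteq> 0"
      using coeff_skew_mult_X_top by simp
    then show False using e by simp
  qed
  then show ?thesis using e by simp
qed

lemma skew_eval_Phi: "skew_eval \<sigma> P b = Phi \<sigma> P b 1"
  unfolding skew_eval_def
proof (rule the_equality)
  show "\<exists>Q'. P = skew_mult \<sigma> Q' [:- b, 1:] + [:Phi \<sigma> P b 1:]" by (rule div_exists)
next
  fix c assume "\<exists>Q'. P = skew_mult \<sigma> Q' [:- b, 1:] + [:c:]"
  then obtain Q' where "P = skew_mult \<sigma> Q' [:- b, 1:] + [:c:]" by blast
  moreover obtain Q'' where "P = skew_mult \<sigma> Q'' [:- b, 1:] + [:Phi \<sigma> P b 1:]"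
    using div_exists by blast
  ultimately show "c = Phi \<sigma> P b 1" using div_unique by metis
qed

lemma root_div:
  assumes "Phi \<sigma> P b 1 = 0" "P \<noteq> 0"
  shows "\<exists>P'. P = skew_mult \<sigma> P' [:- b, 1:] \<and> degree P = Suc (degree P')"
proof -
  obtain P' where P: "P = skew_mult \<sigma> P' [:- b, 1:]" using div_exists[of P b] assms(1) by auto
  then have "P' \<noteq> 0" using assms(2) by auto
  then have "coeff P (Suc (degree P')) \<noteq> 0" using P coeff_skew_mult_X_top by simp
  then have "Suc (degree P') \<le> degree P" by (rule le_degree)
  moreover have "degree P \<le> degree P' + 1" using P degree_skew_mult[of P' "[:- b, 1:]"] by simp
  ultimately show ?thesis using P by auto
qed

end

locale ringR = skew \<sigma> for \<sigma> :: "'a::{comm_ring_1,finite} \<Rightarrow> 'a" +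
  fixes R :: "'a set"
  assumes R_fix: "R = {x. \<sigma> x = x}"
    and chain: "chain_ring R"
begin

lemma zero_ne_one: "(0::'a) \<noteq> 1" using chain unfolding chain_ring_def by blast

lemma R0[simp]: "0 \<in> R" using R_fix s_zero by auto
lemma R1[simp]: "1 \<in> R" using R_fix s_one by auto
lemma R_add[simp]: "x \<in> R \<Longrightarrow> y \<in> R \<Longrightarrow> x + y \<in> R" using R_fix s_add by auto
lemma R_mult[simp]: "x \<in> R \<Longrightarrow> y \<in> R \<Longrightarrow> x * y \<in> R" using R_fix s_mult by auto
lemma R_minus[simp]: "x \<in> R \<Longrightarrow> - x \<in> R" using R_fix s_minus by auto
lemma R_diff[simp]: "x \<in> R \<Longrightarrow> y \<in> R \<Longrightarrow> x - y \<in> R" using R_fix s_diff by auto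
lemma R_sum: "(\<And>i. i \<in> A \<Longrightarrow> f i \<in> R) \<Longrightarrow> (\<Sum>i\<in>A. f i) \<in> R"
  by (induction A rule: infinite_finite_induct) auto
lemma R_prod: "(\<And>i. i \<in> A \<Longrightarrow> f i \<in> R) \<Longrightarrow> (\<Prod>i\<in>A. f i) \<in> R"
  by (induction A rule: infinite_finite_induct) auto
lemma R_pow: "x \<in> R \<Longrightarrow> x ^ n \<in> R"
  by (induction n) auto
lemma R_sig: "x \<in> R \<Longrightarrow> \<sigma> x = x" using R_fix by auto
lemma R_sp: "x \<in> R \<Longrightarrow> (\<sigma>^^i) x = x" using R_sig sp_fix by auto

lemma principal_ideal: "x \<in> R \<Longrightarrow> ring_ideal R {x * r | r. r \<in> R}"
proof -
  assume x: "x \<in> R"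
  let ?I = "{x * r | r. r \<in> R}"
  have "?I \<subseteq> R" using x by auto
  moreover have "0 \<in> ?I" by (rule CollectI, rule exI[of _ 0]) simp
  moreover have "\<forall>a\<in>?I. \<forall>b\<in>?I. a + b \<in> ?I"
  proof (intro ballI)
    fix a b assume "a \<in> ?I" "b \<in> ?I"
    then obtain r s where "r \<in> R" "s \<in> R" "a = x * r" "b = x * s" by blast
    then show "a + b \<in> ?I" by (intro CollectI exI[of _ "r + s"]) (simp add: distrib_left)
  qed
  moreover have "\<forall>t\<in>R. \<forall>a\<in>?I. t * a \<in> ?I"
  proof (intro ballI)
    fix t a assume "t \<in> R" "a \<in> ?I"
    then obtain r where "r \<in> R" "a = x * r" by blast
    then show "t * a \<in> ?I" using \<open>t \<in> R\<close> by (intro CollectI exI[of _ "t * r"]) (simp add: mult.left_commute)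
  qed
  ultimately show ?thesis unfolding ring_ideal_def by blast
qed

lemma chain_principal: "x \<in> R \<Longrightarrow> y \<in> R \<Longrightarrow> (\<exists>r\<in>R. x = y * r) \<or> (\<exists>r\<in>R. y = x * r)"
proof -
  assume x: "x \<in> R" and y: "y \<in> R"
  have "{x * r | r. r \<in> R} \<subseteq> {y * r | r. r \<in> R} \<or> {y * r | r. r \<in> R} \<subseteq> {x * r | r. r \<in> R}"
    using chain principal_ideal[OF x] principal_ideal[OF y] unfolding chain_ring_def by blast
  moreover have "x \<in> {x * r | r. r \<in> R}" "y \<in> {y * r | r. r \<in> R}"
    by (auto intro!: exI[of _ 1])
  ultimately show ?thesis by blast
qed

abbreviation "mm \<equiv> nonunits R"

lemma mm_iff: "x \<in> mm \<longleftrightarrow> x \<in> R \<and> \<not> (\<exists>y\<in>R. x * y = 1)"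
  unfolding nonunits_def is_unit_in_def by auto

lemma mm_R: "x \<in> mm \<Longrightarrow> x \<in> R" using mm_iff by auto
lemma mm0[simp]: "0 \<in> mm" using mm_iff zero_ne_one by auto
lemma mm1: "1 \<notin> mm" using mm_iff by fastforce
lemma mm_multR: "x \<in> mm \<Longrightarrow> r \<in> R \<Longrightarrow> x * r \<in> mm"
  unfolding mm_iff by (metis R_mult mult.assoc)
lemma mm_multL: "x \<in> mm \<Longrightarrow> r \<in> R \<Longrightarrow> r * x \<in> mm"
  by (metis mm_multR mult.commute)
lemma mm_add: assumes "x \<in> mm" "y \<in> mm" shows "x + y \<in> mm"
proof -
  have xR: "x \<in> R" and yR: "y \<in> R" using assms mm_R by auto
  show ?thesis
  proof (cases "\<exists>r\<in>R. x = y * r")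
    case True
    then obtain r where r: "r \<in> R" "x = y * r" by blast
    then have "x + y = y * (r + 1)" by (simp add: algebra_simps)
    then show ?thesis using mm_multR[OF assms(2)] r by simp
  next
    case False
    then obtain r where r: "r \<in> R" "y = x * r" using chain_principal[OF xR yR] by blast
    then have "x + y = x * (r + 1)" by (simp add: algebra_simps)
    then show ?thesis using mm_multR[OF assms(1)] r by simp
  qed
qed
lemma mm_minus: "x \<in> mm \<Longrightarrow> - x \<in> mm"
  using mm_multR[of x "-1"] by simp
lemma mm_diff: "x \<in> mm \<Longrightarrow> y \<in> mm \<Longrightarrow> x - y \<in> mm"
  using mm_add mm_minus by (metis diff_conv_add_uminus)
lemma mm_sum: "(\<And>i. i \<in> A \<Longrightarrow> f i \<in> mm) \<Longrightarrow> (\<Sum>i\<in>A. f i) \<in> mm"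
  by (induction A rule: infinite_finite_induct) (auto intro: mm_add)
lemma notmm_unit: "x \<in> R \<Longrightarrow> x \<notin> mm \<Longrightarrow> \<exists>y\<in>R. x * y = 1"
  using mm_iff by auto

lemma principal_aux: "finite A \<Longrightarrow> A \<noteq> {} \<Longrightarrow> A \<subseteq> R \<Longrightarrow> \<exists>p\<in>A. \<forall>x\<in>A. \<exists>r\<in>R. x = p * r"
proof (induction A rule: finite_ne_induct)
  case (singleton x) then show ?case by (auto intro!: bexI[of _ 1])
next
  case (insert x A)
  then obtain p where p: "p \<in> A" "\<forall>y\<in>A. \<exists>r\<in>R. y = p * r" by auto
  have xR: "x \<in> R" and pR: "p \<in> R" using insert p by auto
  show ?case
  proof (cases "\<exists>r\<in>R. x = p * r")
    case True then show ?thesis using p by auto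
  next
    case False
    then obtain r where r: "r \<in> R" "p = x * r" using chain_principal[OF xR pR] by blast
    have "\<forall>y\<in>insert x A. \<exists>r\<in>R. y = x * r"
    proof
      fix y assume "y \<in> insert x A"
      then show "\<exists>r\<in>R. y = x * r"
      proof
        assume "y = x" then show ?thesis by (auto intro!: bexI[of _ 1])
      next
        assume "y \<in> A"
        then obtain r' where "r' \<in> R" "y = p * r'" using p by auto
        then show ?thesis using r by (auto intro!: bexI[of _ "r * r'"] simp: mult.assoc)
      qed
    qed
    then show ?thesis by auto
  qed
qed

definition pi where "pi = (SOME p. p \<in> mm \<and> (\<forall>x\<in>mm. \<exists>r\<in>R. x = p * r))"

lemma pi_props: "pi \<in> mm" "\<forall>x\<in>mm. \<exists>r\<in>R. x = pi * r"
proof -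
  have "\<exists>p\<in>mm. \<forall>x\<in>mm. \<exists>r\<in>R. x = p * r"
  proof (rule principal_aux)
    show "mm \<noteq> {}" using mm0 by blast
    show "mm \<subseteq> R" using mm_R by blast
  qed simp
  then obtain p where "p \<in> mm \<and> (\<forall>x\<in>mm. \<exists>r\<in>R. x = p * r)" by blast
  then have "pi \<in> mm \<and> (\<forall>x\<in>mm. \<exists>r\<in>R. x = pi * r)"
    unfolding pi_def by (rule someI[where P="\<lambda>p. p \<in> mm \<and> (\<forall>x\<in>mm. \<exists>r\<in>R. x = p * r)"])
  then show "pi \<in> mm" "\<forall>x\<in>mm. \<exists>r\<in>R. x = pi * r" by auto
qed

lemma pi_R: "pi \<in> R" using pi_props mm_R by auto

lemma mm_iff_pi: "x \<in> mm \<longleftrightarrow> (\<exists>r\<in>R. x = pi * r)"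
  using pi_props mm_multR by auto

lemma pow_repeat: "\<exists>i j. i < j \<and> (y::'a) ^ i = y ^ j"
proof -
  have "\<not> inj (\<lambda>n::nat. y ^ n)"
    using range_inj_infinite finite by blast
  then obtain i j where "i \<noteq> j" "y ^ i = y ^ j" unfolding inj_def by blast
  then show ?thesis by (metis linorder_neqE_nat)
qed

lemma pi_pow_mm: "0 < k \<Longrightarrow> pi ^ k \<in> mm"
proof (induction k)
  case (Suc k)
  show ?case
  proof (cases k)
    case 0 then show ?thesis using pi_props by simp
  next
    case (Suc k')
    then have "pi ^ k \<in> mm" using Suc.IH by simp
    then have "pi ^ k * pi \<in> mm" using mm_multR pi_R by blast
    then show ?thesis by (simp add: mult.commute)
  qed
qed simp

lemma pi_nilpotent: "\<exists>N. pi ^ N = 0"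
proof -
  obtain i j where ij: "i < j" "pi ^ i = pi ^ j" using pow_repeat by blast
  define k where "k = j - i"
  have jk: "j = i + k" using ij k_def by simp
  have k: "0 < k" "pi ^ j = pi ^ i * pi ^ k" using ij unfolding jk by (auto simp: power_add)
  have "1 - pi ^ k \<notin> mm"
  proof
    assume "1 - pi ^ k \<in> mm"
    then have "(1 - pi ^ k) + pi ^ k \<in> mm" using mm_add pi_pow_mm[OF k(1)] by blast
    then show False using mm1 by simp
  qed
  moreover have "1 - pi ^ k \<in> R" using R_pow[OF pi_R] by simp
  ultimately obtain z where "(1 - pi ^ k) * z = 1" using notmm_unit by blast
  moreover have "pi ^ i * (1 - pi ^ k) = 0" using ij k by (simp add: algebra_simps)
  ultimately have "pi ^ i = 0" by (metis mult.assoc mult_1_right mult_zero_left)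
  then show ?thesis by blast
qed

end

context ringR begin

definition Rp :: "'a poly \<Rightarrow> bool" where "Rp p \<longleftrightarrow> (\<forall>i. coeff p i \<in> R)"
definition z0 :: "'a poly \<Rightarrow> bool" where "z0 p \<longleftrightarrow> (\<forall>i. coeff p i \<in> mm)"

lemma coeffs_R: "set (coeffs p) \<subseteq> R \<longleftrightarrow> Rp p"
proof
  assume a: "set (coeffs p) \<subseteq> R"
  show "Rp p" unfolding Rp_def
  proof
    fix i show "coeff p i \<in> R"
    proof (cases "p \<noteq> 0 \<and> i \<le> degree p")
      case True then show ?thesis using coeff_in_coeffs a by blast
    next
      case False then show ?thesis by (auto simp: coeff_eq_0)
    qed
  qed
next
  assume "Rp p"
  then show "set (coeffs p) \<subseteq> R" unfolding Rp_def coeffs_def by auto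
qed

lemma Rp_0[simp]: "Rp 0" by (simp add: Rp_def)
lemma Rp_add: "Rp p \<Longrightarrow> Rp q \<Longrightarrow> Rp (p + q)" by (simp add: Rp_def)
lemma Rp_diff: "Rp p \<Longrightarrow> Rp q \<Longrightarrow> Rp (p - q)" by (simp add: Rp_def)
lemma Rp_mult: "Rp p \<Longrightarrow> Rp q \<Longrightarrow> Rp (p * q)"
  by (simp add: Rp_def coeff_mult R_sum)
lemma Rp_smult: "r \<in> R \<Longrightarrow> Rp p \<Longrightarrow> Rp (smult r p)" by (simp add: Rp_def)
lemma Rp_monom: "r \<in> R \<Longrightarrow> Rp (monom r n)" by (simp add: Rp_def coeff_monom)
lemma Rp_const: "r \<in> R \<Longrightarrow> Rp [:r:]" by (simp add: Rp_def coeff_pCons split: nat.split)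

lemma z0_Rp: "z0 p \<Longrightarrow> Rp p" using mm_R by (auto simp: z0_def Rp_def)
lemma z0_0[simp]: "z0 0" by (simp add: z0_def)
lemma z0_add: "z0 p \<Longrightarrow> z0 q \<Longrightarrow> z0 (p + q)" by (simp add: z0_def mm_add)
lemma z0_diff: "z0 p \<Longrightarrow> z0 q \<Longrightarrow> z0 (p - q)" by (simp add: z0_def mm_diff)
lemma z0_minus: "z0 p \<Longrightarrow> z0 (- p)" by (simp add: z0_def mm_minus)
lemma z0_multR: "z0 p \<Longrightarrow> Rp q \<Longrightarrow> z0 (p * q)"
  unfolding z0_def Rp_def coeff_mult by (auto intro!: mm_sum mm_multR)
lemma z0_multL: "z0 p \<Longrightarrow> Rp q \<Longrightarrow> z0 (q * p)"
  using z0_multR by (simp add: mult.commute)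
lemma z0_diff_sym: "z0 (p - q) \<Longrightarrow> z0 (q - p)"
  using z0_minus[of "p - q"] by simp
lemma z0_trans: "z0 (p - q) \<Longrightarrow> z0 (q - r) \<Longrightarrow> z0 (p - r)"
  using z0_add[of "p - q" "q - r"] by simp

lemma trunc:
  assumes "Rp p" "\<not> z0 p"
  shows "\<exists>p'. Rp p' \<and> z0 (p - p') \<and> degree p' \<le> degree p \<and> lead_coeff p' \<notin> mm"
proof -
  define A where "A = {i. coeff p i \<notin> mm}"
  have A_sub: "A \<subseteq> {..degree p}"
  proof
    fix x assume "x \<in> A"
    then have "coeff p x \<noteq> 0" using mm0 unfolding A_def by auto
    then show "x \<in> {..degree p}" using le_degree by auto
  qed
  then have fA: "finite A" by (rule finite_subset) simp
  have "A \<noteq> {}" using assms(2) unfolding A_def z0_def by auto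
  define k where "k = Max A"
  have kA: "k \<in> A" unfolding k_def using fA \<open>A \<noteq> {}\<close> by simp
  have kmax: "\<And>i. k < i \<Longrightarrow> coeff p i \<in> mm"
    using Max_ge[OF fA] unfolding k_def A_def by force
  define p' where "p' = poly_cutoff (Suc k) p"
  have cp': "coeff p' i = (if i \<le> k then coeff p i else 0)" for i
    unfolding p'_def by (simp add: coeff_poly_cutoff)
  have "coeff p' k \<noteq> 0" using kA mm0 unfolding A_def cp' by auto
  moreover have "degree p' \<le> k" by (rule degree_le) (simp add: cp')
  ultimately have dp': "degree p' = k" using le_degree[of p' k] by linarith
  show ?thesis
  proof (intro exI conjI)
    show "Rp p'" using assms(1) unfolding Rp_def by (simp add: cp')
    show "z0 (p - p')" unfolding z0_def using kmax by (simp add: cp')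
    show "degree p' \<le> degree p" using dp' kA A_sub by auto
    show "lead_coeff p' \<notin> mm" using dp' kA unfolding A_def by (simp add: cp')
  qed
qed

lemma R_div:
  assumes "Rp d" "v \<in> R" "lead_coeff d * v = 1"
  shows "Rp p \<Longrightarrow> \<exists>q r. Rp q \<and> Rp r \<and> p = q * d + r \<and> (r = 0 \<or> degree r < degree d)"
proof (induction "degree p" arbitrary: p rule: less_induct)
  case less
  show ?case
  proof (cases "degree p < degree d")
    case True
    then show ?thesis using less.prems by (intro exI[of _ 0] exI[of _ p]) auto
  next
    case False
    define c where "c = lead_coeff p * v"
    define k where "k = degree p - degree d"
    define p' where "p' = p - monom c k * d"
    have cR: "c \<in> R" using less.prems assms unfolding c_def Rp_def by simp
    have Rp': "Rp p'" unfolding p'_def using less.prems assms cR by (intro Rp_diff Rp_mult Rp_monom)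
    have cz: "coeff p' n = 0" if "degree p \<le> n" for n
    proof (cases "n = degree p")
      case True
      have "coeff (monom c k * d) n = c * coeff d (degree d)"
        using False True unfolding k_def by (simp add: coeff_monom_mult)
      also have "\<dots> = lead_coeff p * (lead_coeff d * v)" unfolding c_def by (simp add: algebra_simps)
      also have "\<dots> = lead_coeff p" using assms(3) by simp
      finally show ?thesis unfolding p'_def using True by simp
    next
      case nt: False
      then have "degree p < n" using that by simp
      then have "degree d < n - k" using False unfolding k_def by linarith
      then show ?thesis unfolding p'_def using \<open>degree p < n\<close>
        by (simp add: coeff_monom_mult coeff_eq_0)
    qed
    have "p' = 0 \<or> degree p' < degree p"
    proof (cases "degree p = 0")
      case True
      then have "p' = 0" using cz by (intro poly_eqI) simp
      then show ?thesis by simp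
    next
      case f2: False
      have "degree p' \<le> degree p - 1" by (rule degree_le) (use cz in auto)
      then show ?thesis using f2 by linarith
    qed
    then show ?thesis
    proof
      assume "p' = 0"
      then have "p = monom c k * d + 0" unfolding p'_def by simp
      then show ?thesis using cR by (intro exI[of _ "monom c k"] exI[of _ 0]) (simp add: Rp_monom)
    next
      assume "degree p' < degree p"
      then obtain q r where qr: "Rp q" "Rp r" "p' = q * d + r" "r = 0 \<or> degree r < degree d"
        using less.hyps Rp' by blast
      then have "p = (q + monom c k) * d + r" unfolding p'_def by (simp add: algebra_simps)
      then show ?thesis using qr cR by (intro exI[of _ "q + monom c k"] exI[of _ r]) (simp add: Rp_add Rp_monom)
    qed
  qed
qed

end

locale ringS = ringR \<sigma> R for \<sigma> :: "'a::{comm_ring_1,finite} \<Rightarrow> 'a" and R +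
  fixes \<theta> :: 'a and h :: "'a poly" and md :: nat
  assumes md1: "md \<ge> 1" and h_lc: "lead_coeff h = 1" and h_deg: "degree h = md"
    and h_R: "set (coeffs h) \<subseteq> R" and h_root: "poly h \<theta> = 0"
    and rep: "\<forall>s. \<exists>!p. set (coeffs p) \<subseteq> R \<and> degree p < md \<and> poly p \<theta> = s"
    and irred: "\<not> (\<exists>f g. lead_coeff f = 1 \<and> lead_coeff g = 1 \<and> degree f \<ge> 1 \<and> degree g \<ge> 1 \<and>
               set (coeffs f) \<subseteq> R \<and> set (coeffs g) \<subseteq> R \<and>
               (\<forall>i. coeff (h - f * g) i \<in> nonunits R))"
begin

lemma rep': "\<exists>!p. Rp p \<and> degree p < md \<and> poly p \<theta> = s"
  using rep coeffs_R by simp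

lemma rep_ex: "\<exists>p. Rp p \<and> degree p < md \<and> poly p \<theta> = s"
  using rep'[of s] by (rule ex1_implies_ex)

lemma rep_uniq: "Rp p \<Longrightarrow> degree p < md \<Longrightarrow> Rp q \<Longrightarrow> degree q < md \<Longrightarrow> poly p \<theta> = poly q \<theta> \<Longrightarrow> p = q"
proof -
  assume a: "Rp p" "degree p < md" "Rp q" "degree q < md" "poly p \<theta> = poly q \<theta>"
  obtain x where x: "Rp x \<and> degree x < md \<and> poly x \<theta> = poly p \<theta>"
    and u: "\<And>y. Rp y \<and> degree y < md \<and> poly y \<theta> = poly p \<theta> \<Longrightarrow> y = x"
    using rep'[of "poly p \<theta>"] by (rule ex1E) blast
  have "p = x" using a by (intro u) simp
  moreover have "q = x" using a by (intro u) simp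
  ultimately show "p = q" by simp
qed

lemma hRp: "Rp h" using h_R coeffs_R by simp

lemma h_mult: "Rp f \<Longrightarrow> poly f \<theta> = 0 \<Longrightarrow> \<exists>q. Rp q \<and> f = q * h"
proof -
  assume f: "Rp f" "poly f \<theta> = 0"
  obtain q r where qr: "Rp q" "Rp r" "f = q * h + r" "r = 0 \<or> degree r < degree h"
    using R_div[OF hRp R1, of f] h_lc f by auto
  have "poly r \<theta> = 0" using f qr h_root by simp
  have "r = 0"
  proof (cases "r = 0")
    case False
    then have "degree r < md" using qr h_deg by simp
    then show ?thesis using rep_uniq[of r 0] qr \<open>poly r \<theta> = 0\<close> md1 by simp
  qed
  then show ?thesis using qr by auto
qed

lemma piS_iff:
  assumes "Rp p" "degree p < md"
  shows "(\<exists>s. poly p \<theta> = pi * s) \<longleftrightarrow> z0 p"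
proof
  assume "\<exists>s. poly p \<theta> = pi * s"
  then obtain s where s: "poly p \<theta> = pi * s" by blast
  obtain ps where ps: "Rp ps" "degree ps < md" "poly ps \<theta> = s" using rep_ex by blast
  have "Rp (smult pi ps)" using ps pi_R by (simp add: Rp_smult)
  moreover have "degree (smult pi ps) < md" using ps degree_smult_le[of pi ps] by linarith
  moreover have "poly (smult pi ps) \<theta> = poly p \<theta>" using s ps by simp
  ultimately have "p = smult pi ps" using rep_uniq assms by metis
  then show "z0 p" unfolding z0_def using ps pi_props(1) mm_multR unfolding Rp_def by simp
next
  assume "z0 p"
  then have "\<forall>i. \<exists>r. r \<in> R \<and> coeff p i = pi * r" unfolding z0_def using mm_iff_pi by blast
  then obtain g where g: "\<And>i. coeff p i = pi * g i" by metis
  have "poly p \<theta> = (\<Sum>i\<le>degree p. coeff p i * \<theta> ^ i)" by (rule poly_altdef)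
  also have "\<dots> = pi * (\<Sum>i\<le>degree p. g i * \<theta> ^ i)" by (simp add: g sum_distrib_left mult.assoc)
  finally show "\<exists>s. poly p \<theta> = pi * s" by blast
qed

lemma L0:
  assumes "Rp g" "degree g < md" "Rp q" "z0 (g - q * h)"
  shows "z0 g"
proof (cases "z0 q")
  case True
  then have "z0 (q * h)" using z0_multR hRp by blast
  then have "z0 ((g - q * h) + q * h)" using z0_add[OF assms(4)] by blast
  then show ?thesis by simp
next
  case False
  obtain q' where q': "Rp q'" "z0 (q - q')" "lead_coeff q' \<notin> mm" using trunc[OF assms(3) False] by blast
  have z: "z0 (g - q' * h)"
  proof -
    have "z0 ((g - q * h) + (q - q') * h)" using assms(4) q'(2) z0_multR hRp z0_add by blast
    then show ?thesis by (simp add: algebra_simps)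
  qed
  define n where "n = degree q' + md"
  have "coeff (q' * h) n = lead_coeff q'" unfolding n_def using coeff_mult_degree_sum[of q' h] h_deg h_lc by simp
  moreover have "coeff g n = 0" using assms(2) unfolding n_def by (simp add: coeff_eq_0)
  ultimately have "- lead_coeff q' \<in> mm" using z unfolding z0_def by (metis coeff_diff diff_0)
  then have "lead_coeff q' \<in> mm" using mm_minus by fastforce
  then show ?thesis using q'(3) by blast
qed

lemma IRR:
  assumes p: "Rp p" "lead_coeff p \<notin> mm" "1 \<le> degree p" "degree p < md"
    and u: "Rp u" "z0 (h - u * p)"
  shows False
proof -
  have lR: "lead_coeff p \<in> R" using p unfolding Rp_def by simp
  obtain v where v: "v \<in> R" "lead_coeff p * v = 1" using notmm_unit[OF lR p(2)] by blast
  define f where "f = smult v p"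
  have cf: "coeff f (degree p) = 1" unfolding f_def using v by (simp add: mult.commute)
  have df: "degree f = degree p"
    using degree_smult_le[of v p] le_degree[of f "degree p"] cf unfolding f_def by simp
  have lf: "lead_coeff f = 1" using cf df by simp
  have Rf: "Rp f" unfolding f_def using v p by (simp add: Rp_smult)
  define w where "w = smult (lead_coeff p) u"
  have Rw: "Rp w" unfolding w_def using lR u by (simp add: Rp_smult)
  have "w * f = smult (lead_coeff p * v) (u * p)" unfolding w_def f_def by (simp add: algebra_simps)
  then have wf: "w * f = u * p" using v by simp
  have zwf: "z0 (h - w * f)" using wf u by simp
  show False
  proof (cases "z0 w")
    case True
    then have "z0 (w * f)" using z0_multR Rf by blast
    then have "z0 ((h - w * f) + w * f)" using z0_add[OF zwf] by blast
    then have "z0 h" by simp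
    then have "coeff h md \<in> mm" unfolding z0_def by blast
    then show False using h_lc h_deg mm1 by simp
  next
    case False
    obtain w' where w': "Rp w'" "z0 (w - w')" "lead_coeff w' \<notin> mm" using trunc[OF Rw False] by blast
    have z: "z0 (h - w' * f)"
    proof -
      have "z0 ((h - w * f) + (w - w') * f)" using zwf w'(2) z0_multR Rf z0_add by blast
      then show ?thesis by (simp add: algebra_simps)
    qed
    define dw where "dw = degree w'"
    have c1: "coeff (w' * f) (dw + degree p) = lead_coeff w'"
      using coeff_mult_degree_sum[of w' f] df lf unfolding dw_def by simp
    have d1: "degree (w' * f) \<le> dw + degree p" using degree_mult_le[of w' f] df unfolding dw_def by simp
    have eq: "dw + degree p = md"
    proof (rule ccontr)
      assume ne: "dw + degree p \<noteq> md"
      show False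
      proof (cases "dw + degree p < md")
        case True
        then have "coeff (w' * f) md = 0" using d1 by (simp add: coeff_eq_0)
        then have "coeff (h - w' * f) md = 1" using h_lc h_deg by simp
        then show False using z mm1 unfolding z0_def by metis
      next
        case False
        then have "md < dw + degree p" using ne by simp
        then have "coeff h (dw + degree p) = 0" using h_deg by (simp add: coeff_eq_0)
        then have "coeff (h - w' * f) (dw + degree p) = - lead_coeff w'" using c1 by simp
        then have "- lead_coeff w' \<in> mm" using z unfolding z0_def by metis
        then have "lead_coeff w' \<in> mm" using mm_minus by fastforce
        then show False using w'(3) by blast
      qed
    qed
    have "coeff (h - w' * f) md = 1 - lead_coeff w'" using c1 eq h_lc h_deg by simp
    then have lm: "1 - lead_coeff w' \<in> mm" using z unfolding z0_def by metis
    define g' where "g' = w' + monom (1 - lead_coeff w') dw"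
    have cg: "coeff g' i = (if i = dw then 1 else coeff w' i)" for i
      unfolding g'_def dw_def by (simp add: coeff_monom)
    have dg: "degree g' = dw"
    proof -
      have "degree g' \<le> dw" by (rule degree_le) (auto simp: cg dw_def coeff_eq_0)
      moreover have "dw \<le> degree g'" by (rule le_degree) (simp add: cg)
      ultimately show ?thesis by simp
    qed
    have lg: "lead_coeff g' = 1" using dg cg by simp
    have Rg: "Rp g'" using w'(1) unfolding Rp_def by (simp add: cg)
    have "z0 (g' - w')" unfolding z0_def g'_def using lm by (simp add: coeff_monom)
    then have "z0 ((h - w' * f) - (g' - w') * f)" using z z0_multR Rf z0_diff by blast
    then have zz: "z0 (h - f * g')" by (simp add: algebra_simps)
    have "dw \<ge> 1" using eq p by simp
    then have "lead_coeff f = 1 \<and> lead_coeff g' = 1 \<and> degree f \<ge> 1 \<and> degree g' \<ge> 1 \<and>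
               set (coeffs f) \<subseteq> R \<and> set (coeffs g') \<subseteq> R \<and>
               (\<forall>i. coeff (h - f * g') i \<in> nonunits R)"
      using lf lg df dg p(3) Rf Rg zz coeffs_R unfolding z0_def by simp
    then show False using irred by blast
  qed
qed

lemma Dprime:
  "Rp p \<Longrightarrow> lead_coeff p \<notin> mm \<Longrightarrow> degree p < md \<Longrightarrow> Rp g \<Longrightarrow> degree g < md \<Longrightarrow> Rp q
    \<Longrightarrow> z0 (p * g - q * h) \<Longrightarrow> z0 g"
proof (induction "degree p" arbitrary: p g q rule: less_induct)
  case less
  have lR: "lead_coeff p \<in> R" using less.prems unfolding Rp_def by simp
  obtain v where v: "v \<in> R" "lead_coeff p * v = 1" using notmm_unit[OF lR less.prems(2)] by blast
  show ?case
  proof (cases "degree p = 0")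
    case True
    then have p: "p = [:lead_coeff p:]" by (metis degree_eq_zeroE coeff_pCons_0)
    have pv: "p * [:v:] = 1" using v by (subst p) (simp add: one_pCons mult.commute)
    have "z0 ((p * g - q * h) * [:v:])" using less.prems(7) v by (intro z0_multR Rp_const)
    moreover have "(p * g - q * h) * [:v:] = g - (q * [:v:]) * h"
    proof -
      have "(p * g - q * h) * [:v:] = g * (p * [:v:]) - (q * [:v:]) * h" by (simp only: algebra_simps)
      then show ?thesis by (simp only: pv mult_1_right)
    qed
    ultimately have "z0 (g - (q * [:v:]) * h)" by simp
    then show ?thesis using L0 less.prems v Rp_mult Rp_const by blast
  next
    case False
    obtain u r where ur: "Rp u" "Rp r" "h = u * p + r" "r = 0 \<or> degree r < degree p"
      using R_div[OF less.prems(1) v] hRp by blast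
    have key: "r * g - (g - u * q) * h = - (u * (p * g - q * h))"
      using ur(3) by (simp add: algebra_simps)
    have zk: "z0 (r * g - (g - u * q) * h)" unfolding key using less.prems(7) ur(1) z0_multL z0_minus by blast
    show ?thesis
    proof (cases "z0 r")
      case True
      then have "z0 (h - u * p)" using ur(3) by simp
      moreover have "1 \<le> degree p" using False by simp
      ultimately have False using IRR[of p u] less.prems ur(1) by blast
      then show ?thesis ..
    next
      case nz: False
      then have "r \<noteq> 0" by auto
      then have dr: "degree r < degree p" using ur(4) by simp
      obtain r' where r': "Rp r'" "z0 (r - r')" "degree r' \<le> degree r" "lead_coeff r' \<notin> mm"
        using trunc[OF ur(2) nz] by blast
      have "z0 ((r * g - (g - u * q) * h) - (r - r') * g)" using zk r'(2) less.prems(4) z0_multR z0_diff by blast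
      then have "z0 (r' * g - (g - u * q) * h)" by (simp add: algebra_simps)
      moreover have "Rp (g - u * q)" using less.prems ur by (simp add: Rp_diff Rp_mult)
      ultimately show ?thesis
        using less.hyps[of r' g "g - u * q"] r' dr less.prems by simp
    qed
  qed
qed

lemma DOM:
  assumes y: "\<not> (\<exists>s. y = pi * s)" and z: "\<not> (\<exists>s. z = pi * s)"
  shows "\<not> (\<exists>s. y * z = pi * s)"
proof
  assume "\<exists>s. y * z = pi * s"
  then obtain s where s: "y * z = pi * s" by blast
  obtain p where p: "Rp p" "degree p < md" "poly p \<theta> = y" using rep_ex by blast
  obtain g where g: "Rp g" "degree g < md" "poly g \<theta> = z" using rep_ex by blast
  obtain pw where pw: "Rp pw" "degree pw < md" "poly pw \<theta> = s" using rep_ex by blast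
  have np: "\<not> z0 p" using piS_iff[OF p(1,2)] y p(3) by metis
  have ng: "\<not> z0 g" using piS_iff[OF g(1,2)] z g(3) by metis
  define F where "F = p * g - smult pi pw"
  have "Rp F" unfolding F_def using p g pw pi_R by (simp add: Rp_diff Rp_mult Rp_smult)
  moreover have "poly F \<theta> = 0" unfolding F_def using p g pw s by simp
  ultimately obtain q where q: "Rp q" "F = q * h" using h_mult by blast
  have "p * g - q * h = smult pi pw" using q(2) unfolding F_def by (simp add: algebra_simps)
  moreover have "z0 (smult pi pw)" unfolding z0_def using pw(1) pi_props(1) mm_multR unfolding Rp_def by simp
  ultimately have zz: "z0 (p * g - q * h)" by simp
  obtain p' where p': "Rp p'" "z0 (p - p')" "degree p' \<le> degree p" "lead_coeff p' \<notin> mm"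
    using trunc[OF p(1) np] by blast
  have "z0 ((p * g - q * h) - (p - p') * g)" using zz p'(2) g(1) z0_multR z0_diff by blast
  then have "z0 (p' * g - q * h)" by (simp add: algebra_simps)
  then have "z0 g" using Dprime[OF p'(1,4) _ g(1,2) q(1)] p'(3) p(2) by simp
  then show False using ng by blast
qed

lemma pi_nonunit: "\<not> (pi * s) dvd 1"
proof
  assume "(pi * s) dvd 1"
  then obtain t where t: "pi * s * t = 1" by (auto elim: dvdE)
  obtain N where N: "pi ^ N = 0" using pi_nilpotent by blast
  have "(pi * s * t) ^ N = 1" using t by simp
  then have "pi ^ N * (s * t) ^ N = 1" by (simp add: power_mult_distrib mult.assoc)
  then show False using N zero_ne_one by simp
qed

lemma one_minus_nil_unit: "(1 - pi * s) dvd 1"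
proof -
  obtain N where N: "pi ^ N = 0" using pi_nilpotent by blast
  have "(pi * s) ^ N = 0" using N by (simp add: power_mult_distrib)
  then have "(1 - pi * s) * (\<Sum>i<N. (pi * s) ^ i) = 1" using one_diff_power_eq[of "pi * s" N] by simp
  then show ?thesis by (metis dvd_triv_left)
qed

lemma notpi_unit:
  assumes y: "\<not> (\<exists>s. y = pi * s)"
  shows "y dvd 1"
proof -
  obtain i j where ij: "i < j" "y ^ i = y ^ j" using pow_repeat by blast
  define k where "k = j - i"
  have jk: "j = i + k" using ij k_def by simp
  have k0: "0 < k" using ij k_def by simp
  have pw: "\<not> (\<exists>s. y ^ n = pi * s)" for n
  proof (induction n)
    case 0
    then show ?case using pi_nonunit by (metis power_0 dvd_refl)
  next
    case (Suc n)
    then show ?case using DOM[OF Suc y] by (simp add: mult.commute)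
  qed
  have "y ^ i * (1 - y ^ k) = 0" using ij jk by (simp add: power_add algebra_simps)
  then have "\<exists>s. y ^ i * (1 - y ^ k) = pi * s" by (intro exI[of _ 0]) simp
  then have "\<exists>s. 1 - y ^ k = pi * s" using DOM[OF pw[of i]] by blast
  then obtain s where "1 - y ^ k = pi * s" by blast
  then have "y ^ k = 1 - pi * s" by (simp add: algebra_simps)
  then have "y ^ k dvd 1" using one_minus_nil_unit by simp
  moreover have "y dvd y ^ k" using k0 by (simp add: dvd_power)
  ultimately show ?thesis using dvd_trans by blast
qed

lemma LOC: "\<not> y dvd 1 \<longleftrightarrow> (\<exists>s. y = pi * s)"
  using notpi_unit pi_nonunit by blast

end

lemma inv_S_eq: "(b::'a::comm_ring_1) * c = 1 \<Longrightarrow> inv_S b = c"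
  unfolding inv_S_def
proof (rule the_equality)
  fix y assume "b * c = 1" "b * y = 1"
  then have "c * (b * y) = c" by simp
  then have "(b * c) * y = c" by (simp add: algebra_simps)
  then show "y = c" using \<open>b * c = 1\<close> by simp
qed

lemma inv_S_unit: "(b::'a::comm_ring_1) dvd 1 \<Longrightarrow> b * inv_S b = 1"
  by (metis dvdE inv_S_eq)

definition indep :: "'a::comm_ring_1 set \<Rightarrow> (nat \<Rightarrow> 'a) \<Rightarrow> nat \<Rightarrow> bool" where
  "indep R g c \<longleftrightarrow> (\<forall>x. (\<forall>j<c. x j \<in> R) \<and> (\<Sum>j<c. x j * g j) = 0 \<longrightarrow> (\<forall>j<c. x j = 0))"

context ringS begin

lemma sig_unit: "u dvd 1 \<Longrightarrow> \<sigma> u * \<sigma> (inv_S u) = 1"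
  using inv_S_unit s_mult s_one by metis

lemma VAL:
  assumes "y \<noteq> 0"
  shows "\<exists>v u. y = pi ^ v * u \<and> u dvd 1 \<and> pi ^ v \<noteq> 0"
proof -
  obtain N where N: "pi ^ N = 0" using pi_nilpotent by blast
  define A where "A = {v. \<exists>u. y = pi ^ v * u}"
  have "0 \<in> A" unfolding A_def by simp
  have bound: "v < N" if "v \<in> A" for v
  proof (rule ccontr)
    assume "\<not> v < N"
    then have "pi ^ v = 0" using N by (metis le_iff_add not_less power_add mult_zero_left)
    then show False using that assms unfolding A_def by auto
  qed
  then have fA: "finite A" by (meson finite_nat_set_iff_bounded)
  define v where "v = Max A"
  have vA: "v \<in> A" unfolding v_def using fA \<open>0 \<in> A\<close> by (intro Max_in) auto
  then obtain u where u: "y = pi ^ v * u" unfolding A_def by blast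
  have "u dvd 1"
  proof (rule ccontr)
    assume "\<not> u dvd 1"
    then obtain s where "u = pi * s" using LOC by blast
    then have "y = pi ^ Suc v * s" using u by (simp add: mult.assoc)
    then have "Suc v \<in> A" unfolding A_def by blast
    then show False using Max_ge[OF fA] unfolding v_def by fastforce
  qed
  moreover have "pi ^ v \<noteq> 0" using u assms by auto
  ultimately show ?thesis using u by blast
qed

lemma ann:
  assumes "\<not> \<beta> dvd 1"
  shows "\<exists>r\<in>R. r \<noteq> 0 \<and> r * \<beta> = 0"
proof -
  obtain s where s: "\<beta> = pi * s" using LOC assms by blast
  have ex: "\<exists>N. pi ^ N = 0" by (rule pi_nilpotent)
  define N where "N = (LEAST N. pi ^ N = 0)"
  have N0: "pi ^ N = 0" unfolding N_def using ex by (rule LeastI_ex)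
  have "N \<noteq> 0" using N0 zero_ne_one by (metis power_0)
  then have "pi ^ (N - 1) \<noteq> 0" unfolding N_def by (metis (mono_tags, lifting) diff_less less_one not_less_Least not_gr_zero N_def)
  moreover have "pi ^ (N - 1) * \<beta> = 0"
  proof -
    have "pi ^ (N - 1) * \<beta> = pi ^ Suc (N - 1) * s" using s by (simp add: mult.assoc)
    also have "Suc (N - 1) = N" using \<open>N \<noteq> 0\<close> by simp
    finally show ?thesis using N0 by simp
  qed
  ultimately show ?thesis using R_pow[OF pi_R] by blast
qed

lemma indep_unit:
  assumes "indep R g c" "j < c"
  shows "g j dvd 1"
proof (rule ccontr)
  assume "\<not> g j dvd 1"
  then obtain r where r: "r \<in> R" "r \<noteq> 0" "r * g j = 0" using ann by blast
  define x where "x = (\<lambda>j'. if j' = j then r else 0)"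
  have "(\<Sum>j'<c. x j' * g j') = (\<Sum>j'<c. if j' = j then r * g j else 0)"
    by (rule sum.cong) (auto simp: x_def)
  also have "\<dots> = r * g j" using assms(2) by simp
  finally have "(\<Sum>j'<c. x j' * g j') = r * g j" .
  then have s0: "(\<Sum>j'<c. x j' * g j') = 0" using r by simp
  have xR: "\<forall>j'<c. x j' \<in> R" using r unfolding x_def by simp
  have "\<forall>j'<c. x j' = 0" using assms(1) s0 xR unfolding indep_def by blast
  then show False using r assms(2) unfolding x_def by auto
qed


end

locale rb = ringS \<sigma> R \<theta> h md for \<sigma> :: "'a::{comm_ring_1,finite} \<Rightarrow> 'a" and R \<theta> h md +
  fixes a :: "nat \<Rightarrow> 'a" and l :: nat
  assumes a_units: "\<forall>i<l. a i dvd 1"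
    and condi: "\<forall>i j b. i < l \<and> j < l \<and> i \<noteq> j \<and> b dvd 1 \<longrightarrow> (a i - \<sigma> b * a j * inv_S b) dvd 1"
begin

lemma K:
  assumes i: "i \<noteq> i0" "i < l" "i0 < l" and g0: "\<gamma>0 dvd 1"
    and eq: "\<sigma> \<delta> * a i = \<sigma> \<gamma>0 * a i0 * inv_S \<gamma>0 * \<delta>"
  shows "\<delta> = 0"
proof (rule ccontr)
  assume "\<delta> \<noteq> 0"
  then obtain v u where vu: "\<delta> = pi ^ v * u" "u dvd 1" "pi ^ v \<noteq> 0" using VAL by blast
  define gi where "gi = inv_S \<gamma>0"
  define ui where "ui = inv_S u"
  have g1: "\<gamma>0 * gi = 1" unfolding gi_def using g0 by (rule inv_S_unit)
  have u1: "u * ui = 1" unfolding ui_def using vu(2) by (rule inv_S_unit)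
  have su1: "\<sigma> u * \<sigma> ui = 1" unfolding ui_def using vu(2) by (rule sig_unit)
  have spi: "\<sigma> (pi ^ v) = pi ^ v" using R_sig R_pow pi_R by blast
  define w where "w = \<sigma> u * a i - \<sigma> \<gamma>0 * a i0 * gi * u"
  have "pi ^ v * w = \<sigma> \<delta> * a i - \<sigma> \<gamma>0 * a i0 * inv_S \<gamma>0 * \<delta>"
    unfolding w_def gi_def vu(1) s_mult spi by (simp add: algebra_simps)
  then have pw: "pi ^ v * w = 0" using eq by simp
  have nw: "\<not> w dvd 1"
  proof
    assume "w dvd 1"
    then obtain w' where "w * w' = 1" by (auto elim: dvdE)
    then have "pi ^ v = pi ^ v * w * w'" by (simp add: mult.assoc)
    then show False using pw vu(3) by simp
  qed
  define \<beta> where "\<beta> = \<gamma>0 * ui"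
  have bb: "\<beta> * (u * gi) = (\<gamma>0 * gi) * (u * ui)" unfolding \<beta>_def by (simp add: algebra_simps)
  then have bb1: "\<beta> * (u * gi) = 1" using g1 u1 by simp
  then have b1: "\<beta> dvd 1" by (rule dvdI[OF sym])
  have ib: "inv_S \<beta> = u * gi" using bb1 by (rule inv_S_eq)
  have "(a i - \<sigma> \<beta> * a i0 * inv_S \<beta>) dvd 1" using condi[rule_format, of i i0 \<beta>] i b1 by simp
  moreover have "a i - \<sigma> \<beta> * a i0 * inv_S \<beta> = \<sigma> ui * w"
  proof -
    have "\<sigma> ui * w = (\<sigma> u * \<sigma> ui) * a i - \<sigma> \<gamma>0 * \<sigma> ui * a i0 * u * gi"
      unfolding w_def by (simp add: algebra_simps)
    moreover have "\<sigma> \<beta> = \<sigma> \<gamma>0 * \<sigma> ui" unfolding \<beta>_def by (rule s_mult)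
    ultimately show ?thesis unfolding ib using su1 by (simp add: algebra_simps)
  qed
  ultimately have "(\<sigma> ui * w) dvd 1" by simp
  then have "w dvd 1" by (rule dvd_mult_right)
  then show False using nw by blast
qed

lemma RB:
  "\<forall>i<l. indep R (\<gamma> i) (cnt i) \<Longrightarrow> \<forall>i<l. \<forall>j<cnt i. Phi \<sigma> P (a i) (\<gamma> i j) = 0
    \<Longrightarrow> degree P < (\<Sum>i<l. cnt i) \<Longrightarrow> P = 0"
proof (induction "degree P" arbitrary: P \<gamma> cnt rule: less_induct)
  case less
  show ?case
  proof (rule ccontr)
    assume P0: "P \<noteq> 0"
    have "\<exists>i0<l. 0 < cnt i0"
    proof (rule ccontr)
      assume "\<not> (\<exists>i0<l. 0 < cnt i0)"
      then have "(\<Sum>i<l. cnt i) = 0" by simp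
      then show False using less.prems(3) by simp
    qed
    then obtain i0 where i0: "i0 < l" "0 < cnt i0" by blast
    define \<gamma>0 where "\<gamma>0 = \<gamma> i0 0"
    have g0: "\<gamma>0 dvd 1" unfolding \<gamma>0_def using indep_unit less.prems(1) i0 by blast
    define gi where "gi = inv_S \<gamma>0"
    have g1: "\<gamma>0 * gi = 1" unfolding gi_def using g0 by (rule inv_S_unit)
    have sg1: "\<sigma> \<gamma>0 * \<sigma> gi = 1" unfolding gi_def using g0 by (rule sig_unit)
    define b where "b = \<sigma> \<gamma>0 * a i0 * gi"
    have "Phi \<sigma> P b 1 * \<gamma>0 = Phi \<sigma> P (a i0) \<gamma>0" unfolding b_def by (rule Phi_conj[OF g1])
    also have "\<dots> = 0" using less.prems(2) i0 unfolding \<gamma>0_def by blast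
    finally have "Phi \<sigma> P b 1 * \<gamma>0 * gi = 0" by simp
    then have "Phi \<sigma> P b 1 = 0" using g1 by (simp add: mult.assoc)
    then obtain P' where P': "P = skew_mult \<sigma> P' [:- b, 1:]" "degree P = Suc (degree P')"
      using root_div P0 by blast
    define T where "T i \<delta> = \<sigma> \<delta> * a i - b * \<delta>" for i \<delta>
    have TX: "Phi \<sigma> [:- b, 1:] (a i) \<delta> = T i \<delta>" for i \<delta> unfolding T_def by (rule Phi_X)
    have comp: "Phi \<sigma> P (a i) \<delta> = Phi \<sigma> P' (a i) (T i \<delta>)" for i \<delta>
      unfolding P'(1) Phi_comp TX ..
    have Tlin: "(\<Sum>j<c. x j * T i (g j)) = T i (\<Sum>j<c. x j * g j)" if "\<forall>j<c. x j \<in> R" for x c i g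
    proof -
      have "(\<Sum>j<c. x j * T i (g j)) = (\<Sum>j<c. Phi \<sigma> [:- b, 1:] (a i) (x j * g j))"
        using that by (intro sum.cong) (auto simp: TX[symmetric] Phi_scal R_sig)
      also have "\<dots> = Phi \<sigma> [:- b, 1:] (a i) (\<Sum>j<c. x j * g j)" by (rule Phi_sum_g[symmetric])
      finally show ?thesis by (simp add: TX)
    qed
    define \<gamma>' where "\<gamma>' i j = (if i = i0 then T i (\<gamma> i (Suc j)) else T i (\<gamma> i j))" for i j
    define cnt' where "cnt' = cnt(i0 := cnt i0 - 1)"
    have "P' = 0"
    proof (rule less.hyps[of P' \<gamma>' cnt'])
      show "degree P' < degree P" using P' by simp
      show "\<forall>i<l. \<forall>j<cnt' i. Phi \<sigma> P' (a i) (\<gamma>' i j) = 0"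
      proof (intro allI impI)
        fix i j assume "i < l" "j < cnt' i"
        show "Phi \<sigma> P' (a i) (\<gamma>' i j) = 0"
        proof (cases "i = i0")
          case True
          then have "Suc j < cnt i" using \<open>j < cnt' i\<close> unfolding cnt'_def by simp
          then show ?thesis using less.prems(2) \<open>i < l\<close> True comp unfolding \<gamma>'_def by simp
        next
          case False
          then show ?thesis using less.prems(2) \<open>i < l\<close> \<open>j < cnt' i\<close> comp unfolding \<gamma>'_def cnt'_def by simp
        qed
      qed
      have "(\<Sum>i<l. cnt i) = cnt i0 + (\<Sum>i\<in>{..<l} - {i0}. cnt i)"
        using i0 by (simp add: sum.remove)
      moreover have "(\<Sum>i<l. cnt' i) = cnt' i0 + (\<Sum>i\<in>{..<l} - {i0}. cnt' i)"
        using i0 by (simp add: sum.remove)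
      moreover have "(\<Sum>i\<in>{..<l} - {i0}. cnt' i) = (\<Sum>i\<in>{..<l} - {i0}. cnt i)"
        unfolding cnt'_def by (rule sum.cong) auto
      ultimately have "(\<Sum>i<l. cnt' i) = (\<Sum>i<l. cnt i) - 1" using i0 unfolding cnt'_def by simp
      then show "degree P' < (\<Sum>i<l. cnt' i)" using less.prems(3) P'(2) by simp
      show "\<forall>i<l. indep R (\<gamma>' i) (cnt' i)"
      proof (intro allI impI)
        fix i assume il: "i < l"
        show "indep R (\<gamma>' i) (cnt' i)"
        proof (cases "i = i0")
          case False
          show ?thesis unfolding indep_def
          proof (rule allI, rule impI)
            fix x assume x: "(\<forall>j<cnt' i. x j \<in> R) \<and> (\<Sum>j<cnt' i. x j * \<gamma>' i j) = 0"
            have c: "cnt' i = cnt i" unfolding cnt'_def using False by simp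
            define \<delta> where "\<delta> = (\<Sum>j<cnt i. x j * \<gamma> i j)"
            have "T i \<delta> = 0" using x Tlin[of "cnt i" x i "\<gamma> i"] unfolding \<delta>_def c \<gamma>'_def using False by simp
            then have "\<sigma> \<delta> * a i = \<sigma> \<gamma>0 * a i0 * inv_S \<gamma>0 * \<delta>" unfolding T_def b_def gi_def by simp
            then have "\<delta> = 0" using K[OF False il i0(1) g0] by blast
            then show "\<forall>j<cnt' i. x j = 0" using less.prems(1) il x unfolding indep_def \<delta>_def c by blast
          qed
        next
          case True
          show ?thesis unfolding indep_def
          proof (rule allI, rule impI)
            fix x assume x: "(\<forall>j<cnt' i. x j \<in> R) \<and> (\<Sum>j<cnt' i. x j * \<gamma>' i j) = 0"
            define c where "c = cnt i0 - 1"
            have cc: "cnt i0 = Suc c" using i0 unfolding c_def by simp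
            have c': "cnt' i = c" unfolding cnt'_def c_def True by simp
            define \<delta> where "\<delta> = (\<Sum>j<c. x j * \<gamma> i0 (Suc j))"
            have c'': "cnt' i0 = c" using c' True by simp
            have "T i0 \<delta> = 0" using x Tlin[of c x i0 "\<lambda>j. \<gamma> i0 (Suc j)"] unfolding \<delta>_def c' \<gamma>'_def True c'' by simp
            then have e1: "\<sigma> \<delta> * a i0 = b * \<delta>" unfolding T_def by simp
            define ai where "ai = inv_S (a i0)"
            have a1: "a i0 * ai = 1" unfolding ai_def using a_units i0 inv_S_unit by blast
            have "\<sigma> \<delta> = \<sigma> \<delta> * a i0 * ai" using a1 by (simp add: mult.assoc)
            also have "\<dots> = \<sigma> \<gamma>0 * gi * \<delta> * (a i0 * ai)" unfolding e1 b_def by (simp add: algebra_simps)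
            finally have e2: "\<sigma> \<delta> = \<sigma> \<gamma>0 * gi * \<delta>" using a1 by simp
            define lam where "lam = gi * \<delta>"
            have "\<sigma> lam = (\<sigma> \<gamma>0 * \<sigma> gi) * gi * \<delta>" unfolding lam_def s_mult e2 by (simp add: algebra_simps)
            then have "\<sigma> lam = lam" using sg1 unfolding lam_def by simp
            then have lR: "lam \<in> R" using R_fix by simp
            have ld: "lam * \<gamma>0 = \<delta>" unfolding lam_def using g1 by (simp add: algebra_simps)
            define y where "y j = (if j = 0 then - lam else x (j - 1))" for j
            have yR: "\<forall>j<cnt i0. y j \<in> R" using x lR unfolding y_def c' cc by (auto simp: less_Suc_eq_0_disj)
            have "(\<Sum>j<cnt i0. y j * \<gamma> i0 j) = y 0 * \<gamma> i0 0 + (\<Sum>j<c. y (Suc j) * \<gamma> i0 (Suc j))"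
              unfolding cc by (rule sum.lessThan_Suc_shift)
            also have "\<dots> = - lam * \<gamma>0 + \<delta>" unfolding y_def \<delta>_def \<gamma>0_def by simp
            also have "\<dots> = 0" using ld by simp
            finally have "\<forall>j<cnt i0. y j = 0" using less.prems(1) i0 yR unfolding indep_def by blast
            then show "\<forall>j<cnt' i. x j = 0" unfolding c' cc y_def by auto
          qed
        qed
      qed
    qed
    then show False using P' P0 by simp
  qed
qed

end

definition idm :: "nat \<Rightarrow> nat \<Rightarrow> 'a::comm_ring_1" where "idm i j = (if i = j then 1 else 0)"

lemma mm_idm_right: "j < n \<Longrightarrow> mat_mult n A idm i j = A i j"
proof -
  assume "j < n"
  have "mat_mult n A idm i j = (\<Sum>l<n. if l = j then A i j else 0)"
    unfolding mat_mult_def idm_def by (rule sum.cong) auto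
  then show ?thesis using \<open>j < n\<close> by simp
qed

lemma mm_idm_left: "i < n \<Longrightarrow> mat_mult n idm A i j = A i j"
proof -
  assume "i < n"
  have "mat_mult n idm A i j = (\<Sum>l<n. if l = i then A i j else 0)"
    unfolding mat_mult_def idm_def by (rule sum.cong) auto
  then show ?thesis using \<open>i < n\<close> by simp
qed

lemma mm_assoc: "mat_mult n (mat_mult m A B) C = mat_mult m A (mat_mult n B C)"
proof (intro ext)
  fix i j
  have "mat_mult n (mat_mult m A B) C i j = (\<Sum>k<n. \<Sum>l<m. A i l * B l k * C k j)"
    unfolding mat_mult_def by (simp add: sum_distrib_right)
  also have "\<dots> = (\<Sum>l<m. \<Sum>k<n. A i l * B l k * C k j)" by (rule sum.swap)
  also have "\<dots> = mat_mult m A (mat_mult n B C) i j"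
    unfolding mat_mult_def by (simp add: sum_distrib_left mult.assoc)
  finally show "mat_mult n (mat_mult m A B) C i j = mat_mult m A (mat_mult n B C) i j" .
qed

lemma mm_cong: "(\<forall>l<m. A i l = A' i l) \<Longrightarrow> (\<forall>l<m. B l j = B' l j) \<Longrightarrow> mat_mult m A B i j = mat_mult m A' B' i j"
  unfolding mat_mult_def by simp

context ringR begin

definition Rmat :: "nat \<Rightarrow> nat \<Rightarrow> (nat \<Rightarrow> nat \<Rightarrow> 'a) \<Rightarrow> bool" where
  "Rmat d1 d2 A \<longleftrightarrow> (\<forall>i<d1. \<forall>j<d2. A i j \<in> R)"

lemma Rmat_mult: "Rmat d1 m A \<Longrightarrow> Rmat m d2 B \<Longrightarrow> Rmat d1 d2 (mat_mult m A B)"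
  unfolding Rmat_def mat_mult_def by (auto intro!: R_sum)

lemma R_inv_idm: "R_invertible R d idm"
  unfolding R_invertible_def
  by (intro conjI exI[of _ idm]) (auto simp: idm_def mm_idm_left)

lemma R_inv_mult:
  assumes "R_invertible R d P" "R_invertible R d P'"
  shows "R_invertible R d (mat_mult d P P')"
proof -
  obtain Pi where Pi: "\<forall>i<d. \<forall>j<d. Pi i j \<in> R" "\<forall>i<d. \<forall>j<d. mat_mult d P Pi i j = idm i j"
    "\<forall>i<d. \<forall>j<d. mat_mult d Pi P i j = idm i j" using assms(1) unfolding R_invertible_def idm_def by blast
  obtain Pi' where Pi': "\<forall>i<d. \<forall>j<d. Pi' i j \<in> R" "\<forall>i<d. \<forall>j<d. mat_mult d P' Pi' i j = idm i j"
    "\<forall>i<d. \<forall>j<d. mat_mult d Pi' P' i j = idm i j" using assms(2) unfolding R_invertible_def idm_def by blast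
  have PR: "Rmat d d P" "Rmat d d P'" using assms unfolding R_invertible_def Rmat_def by auto
  have 1: "mat_mult d (mat_mult d P P') (mat_mult d Pi' Pi) i j = idm i j" if "i < d" "j < d" for i j
  proof -
    have "mat_mult d (mat_mult d P P') (mat_mult d Pi' Pi) i j = mat_mult d P (mat_mult d (mat_mult d P' Pi') Pi) i j"
      by (simp add: mm_assoc)
    also have "\<dots> = mat_mult d P (mat_mult d idm Pi) i j"
      by (intro mm_cong allI impI refl) (simp add: Pi')
    also have "\<dots> = mat_mult d P Pi i j"
      by (intro mm_cong allI impI refl) (simp add: mm_idm_left)
    finally show ?thesis using Pi that by simp
  qed
  have 2: "mat_mult d (mat_mult d Pi' Pi) (mat_mult d P P') i j = idm i j" if "i < d" "j < d" for i j
  proof -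
    have "mat_mult d (mat_mult d Pi' Pi) (mat_mult d P P') i j = mat_mult d Pi' (mat_mult d (mat_mult d Pi P) P') i j"
      by (simp add: mm_assoc)
    also have "\<dots> = mat_mult d Pi' (mat_mult d idm P') i j"
      by (intro mm_cong allI impI refl) (simp add: Pi)
    also have "\<dots> = mat_mult d Pi' P' i j"
      by (intro mm_cong allI impI refl) (simp add: mm_idm_left)
    finally show ?thesis using Pi' that by simp
  qed
  have "Rmat d d Pi" "Rmat d d Pi'" using Pi(1) Pi'(1) unfolding Rmat_def by auto
  then have "Rmat d d (mat_mult d P P')" "Rmat d d (mat_mult d Pi' Pi)"
    using PR Rmat_mult by blast+
  then show ?thesis unfolding R_invertible_def Rmat_def
    by (intro conjI exI[of _ "mat_mult d Pi' Pi"]) (use 1 2 in \<open>simp_all add: idm_def\<close>)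
qed

definition eqvm :: "nat \<Rightarrow> nat \<Rightarrow> (nat \<Rightarrow> nat \<Rightarrow> 'a) \<Rightarrow> (nat \<Rightarrow> nat \<Rightarrow> 'a) \<Rightarrow> bool" where
  "eqvm d1 d2 A B \<longleftrightarrow> (\<exists>P Q. R_invertible R d1 P \<and> R_invertible R d2 Q \<and>
      (\<forall>i<d1. \<forall>j<d2. B i j = mat_mult d2 (mat_mult d1 P A) Q i j))"

lemma eqvm_refl: "eqvm d1 d2 A A"
  unfolding eqvm_def
  by (intro exI[of _ idm] conjI R_inv_idm allI impI) (simp add: mm_idm_right mm_idm_left)

lemma eqvm_trans:
  assumes "eqvm d1 d2 A B" "eqvm d1 d2 B C"
  shows "eqvm d1 d2 A C"
proof -
  from assms(1)[unfolded eqvm_def] obtain P Q where PQ: "R_invertible R d1 P" "R_invertible R d2 Q"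
    "\<forall>i<d1. \<forall>j<d2. B i j = mat_mult d2 (mat_mult d1 P A) Q i j"
    by (elim exE conjE) (rule that; assumption)
  from assms(2)[unfolded eqvm_def] obtain P' Q' where PQ': "R_invertible R d1 P'" "R_invertible R d2 Q'"
    "\<forall>i<d1. \<forall>j<d2. C i j = mat_mult d2 (mat_mult d1 P' B) Q' i j"
    by (elim exE conjE) (rule that; assumption)
  define B0 where "B0 = mat_mult d2 (mat_mult d1 P A) Q"
  have "C i j = mat_mult d2 (mat_mult d1 (mat_mult d1 P' P) A) (mat_mult d2 Q Q') i j" if "i < d1" "j < d2" for i j
  proof -
    have e1: "C i j = mat_mult d2 (mat_mult d1 P' B) Q' i j" using PQ'(3) that by simp
    have e2: "mat_mult d1 P' B i l = mat_mult d1 P' B0 i l" if "l < d2" for l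
    proof (rule mm_cong)
      show "\<forall>l'<d1. P' i l' = P' i l'" by simp
      show "\<forall>l'<d1. B l' l = B0 l' l" using PQ(3) that unfolding B0_def by simp
    qed
    have "mat_mult d2 (mat_mult d1 P' B) Q' i j = mat_mult d2 (mat_mult d1 P' B0) Q' i j"
    proof (rule mm_cong)
      show "\<forall>l<d2. mat_mult d1 P' B i l = mat_mult d1 P' B0 i l" using e2 by simp
    qed simp
    also have "\<dots> = mat_mult d2 (mat_mult d1 (mat_mult d1 P' P) A) (mat_mult d2 Q Q') i j"
      unfolding B0_def by (simp only: mm_assoc)
    finally show ?thesis using e1 by simp
  qed
  moreover have "R_invertible R d1 (mat_mult d1 P' P)" "R_invertible R d2 (mat_mult d2 Q Q')"
    using R_inv_mult PQ PQ' by blast+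
  ultimately show ?thesis unfolding eqvm_def by blast
qed

definition tr :: "nat \<Rightarrow> nat \<Rightarrow> nat \<Rightarrow> nat" where
  "tr a b i = (if i = a then b else if i = b then a else i)"

lemma tr_tr[simp]: "tr a b (tr a b i) = i" unfolding tr_def by auto
lemma tr_eq: "j = tr a b l \<longleftrightarrow> l = tr a b j" by (metis tr_tr)
lemma tr_lt: "a < d \<Longrightarrow> b < d \<Longrightarrow> i < d \<Longrightarrow> tr a b i < d" unfolding tr_def by auto

definition pm :: "(nat \<Rightarrow> nat) \<Rightarrow> nat \<Rightarrow> nat \<Rightarrow> 'a" where "pm f i j = (if j = f i then 1 else 0)"

lemma pm_left: "f i < d \<Longrightarrow> mat_mult d (pm f) A i j = A (f i) j"
proof -
  assume "f i < d"
  have "mat_mult d (pm f) A i j = (\<Sum>l<d. if l = f i then A (f i) j else 0)"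
    unfolding mat_mult_def pm_def by (rule sum.cong) auto
  then show ?thesis using \<open>f i < d\<close> by simp
qed

lemma pm_right_tr: "tr a b j < d \<Longrightarrow> mat_mult d A (pm (tr a b)) i j = A i (tr a b j)"
proof -
  assume "tr a b j < d"
  have "mat_mult d A (pm (tr a b)) i j = (\<Sum>l<d. if l = tr a b j then A i l else 0)"
    unfolding mat_mult_def pm_def
  proof (intro sum.cong refl)
    fix l show "A i l * (if j = tr a b l then 1 else 0) = (if l = tr a b j then A i l else 0)"
      using tr_eq[of j a b l] by simp
  qed
  then show ?thesis using \<open>tr a b j < d\<close> by simp
qed

lemma R_inv_pm: "a < d \<Longrightarrow> b < d \<Longrightarrow> R_invertible R d (pm (tr a b))"
  unfolding R_invertible_def
  by (intro conjI exI[of _ "pm (tr a b)"]) (auto simp: pm_def pm_left tr_lt)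

lemma eqvm_perm:
  assumes "a < d1" "b < d1" "c < d2" "e < d2"
  shows "eqvm d1 d2 A (\<lambda>i j. A (tr a b i) (tr c e j))"
  unfolding eqvm_def
proof (intro exI conjI)
  show "R_invertible R d1 (pm (tr a b))" "R_invertible R d2 (pm (tr c e))" using R_inv_pm assms by auto
  show "\<forall>i<d1. \<forall>j<d2. A (tr a b i) (tr c e j) = mat_mult d2 (mat_mult d1 (pm (tr a b)) A) (pm (tr c e)) i j"
    using assms by (auto simp: pm_right_tr pm_left tr_lt)
qed

definition Eadd :: "(nat \<Rightarrow> 'a) \<Rightarrow> nat \<Rightarrow> nat \<Rightarrow> nat \<Rightarrow> 'a" where
  "Eadd r t i j = idm i j + (if j = t \<and> t < i then r i else 0)"

lemma Eadd_left: "t < d \<Longrightarrow> i < d \<Longrightarrow> mat_mult d (Eadd r t) A i j = A i j + (if t < i then r i * A t j else 0)"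
proof -
  assume "t < d" "i < d"
  have "mat_mult d (Eadd r t) A i j = (\<Sum>l<d. (if l = i then A i j else 0) + (if l = t then (if t < i then r i * A t j else 0) else 0))"
    unfolding mat_mult_def Eadd_def idm_def by (rule sum.cong) (auto simp: distrib_right)
  then show ?thesis using \<open>t < d\<close> \<open>i < d\<close> by (simp add: sum.distrib)
qed

definition Fadd :: "(nat \<Rightarrow> 'a) \<Rightarrow> nat \<Rightarrow> nat \<Rightarrow> nat \<Rightarrow> 'a" where
  "Fadd r t i j = idm i j + (if i = t \<and> t < j then r j else 0)"

lemma Fadd_right: "t < d \<Longrightarrow> j < d \<Longrightarrow> mat_mult d A (Fadd r t) i j = A i j + (if t < j then A i t * r j else 0)"
proof -
  assume "t < d" "j < d"
  have "mat_mult d A (Fadd r t) i j = (\<Sum>l<d. (if l = j then A i j else 0) + (if l = t then (if t < j then A i t * r j else 0) else 0))"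
    unfolding mat_mult_def Fadd_def idm_def by (rule sum.cong) (auto simp: distrib_left)
  then show ?thesis using \<open>t < d\<close> \<open>j < d\<close> by (simp add: sum.distrib)
qed

lemma R_inv_Eadd:
  assumes "t < d" "\<forall>i. r i \<in> R"
  shows "R_invertible R d (Eadd r t)"
  unfolding R_invertible_def
proof (intro conjI exI[of _ "Eadd (\<lambda>i. - r i) t"])
  show "\<forall>i<d. \<forall>j<d. Eadd r t i j \<in> R" "\<forall>i<d. \<forall>j<d. Eadd (\<lambda>i. - r i) t i j \<in> R"
    using assms by (auto simp: Eadd_def idm_def)
  show "\<forall>i<d. \<forall>j<d. mat_mult d (Eadd r t) (Eadd (\<lambda>i. - r i) t) i j = (if i = j then 1 else 0)"
    using assms by (auto simp: Eadd_left Eadd_def idm_def)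
  show "\<forall>i<d. \<forall>j<d. mat_mult d (Eadd (\<lambda>i. - r i) t) (Eadd r t) i j = (if i = j then 1 else 0)"
    using assms by (auto simp: Eadd_left Eadd_def idm_def)
qed

lemma R_inv_Fadd:
  assumes "t < d" "\<forall>i. r i \<in> R"
  shows "R_invertible R d (Fadd r t)"
  unfolding R_invertible_def
proof (intro conjI exI[of _ "Fadd (\<lambda>i. - r i) t"])
  show "\<forall>i<d. \<forall>j<d. Fadd r t i j \<in> R" "\<forall>i<d. \<forall>j<d. Fadd (\<lambda>i. - r i) t i j \<in> R"
    using assms by (auto simp: Fadd_def idm_def)
  show "\<forall>i<d. \<forall>j<d. mat_mult d (Fadd r t) (Fadd (\<lambda>i. - r i) t) i j = (if i = j then 1 else 0)"
    using assms by (auto simp: Fadd_right Fadd_def idm_def)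
  show "\<forall>i<d. \<forall>j<d. mat_mult d (Fadd (\<lambda>i. - r i) t) (Fadd r t) i j = (if i = j then 1 else 0)"
    using assms by (auto simp: Fadd_right Fadd_def idm_def)
qed

lemma eqvm_rowop:
  assumes "t < d1" "\<forall>i. r i \<in> R"
  shows "eqvm d1 d2 A (\<lambda>i j. A i j + (if t < i then r i * A t j else 0))"
  unfolding eqvm_def
  by (rule exI[of _ "Eadd r t"], rule exI[of _ idm], intro conjI R_inv_Eadd R_inv_idm assms allI impI)
     (simp add: mm_idm_right Eadd_left assms)

lemma eqvm_colop:
  assumes "t < d2" "\<forall>i. r i \<in> R"
  shows "eqvm d1 d2 A (\<lambda>i j. A i j + (if t < j then A i t * r j else 0))"
  unfolding eqvm_def
proof (rule exI[of _ idm], rule exI[of _ "Fadd r t"], intro conjI R_inv_Fadd R_inv_idm assms allI impI)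
  fix i j assume "i < d1" "j < d2"
  have "mat_mult d2 (mat_mult d1 idm A) (Fadd r t) i j = mat_mult d2 A (Fadd r t) i j"
    using \<open>i < d1\<close> by (intro mm_cong) (auto simp: mm_idm_left)
  then show "A i j + (if t < j then A i t * r j else 0) = mat_mult d2 (mat_mult d1 idm A) (Fadd r t) i j"
    using assms \<open>j < d2\<close> by (simp add: Fadd_right)
qed


definition snfinv :: "nat \<Rightarrow> nat \<Rightarrow> nat \<Rightarrow> (nat \<Rightarrow> nat \<Rightarrow> 'a) \<Rightarrow> bool" where
  "snfinv d1 d2 t A \<longleftrightarrow>
    (\<forall>i<d1. \<forall>j<d2. (i < t \<or> j < t) \<and> i \<noteq> j \<longrightarrow> A i j = 0) \<and>
    (\<forall>i. Suc i < t \<longrightarrow> (\<exists>x\<in>R. A (Suc i) (Suc i) = x * A i i)) \<and>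
    (0 < t \<longrightarrow> (\<forall>i<d1. \<forall>j<d2. t \<le> i \<and> t \<le> j \<longrightarrow> (\<exists>x\<in>R. A i j = x * A (t - 1) (t - 1))))"

lemma snf_step:
  assumes A: "Rmat d1 d2 A" "snfinv d1 d2 t A" and t: "t < d1" "t < d2"
  shows "\<exists>A'. eqvm d1 d2 A A' \<and> Rmat d1 d2 A' \<and> snfinv d1 d2 (Suc t) A'"
proof -
  have inv1: "\<And>i j. i < d1 \<Longrightarrow> j < d2 \<Longrightarrow> (i < t \<or> j < t) \<Longrightarrow> i \<noteq> j \<Longrightarrow> A i j = 0"
   and inv2: "\<And>i. Suc i < t \<Longrightarrow> \<exists>x\<in>R. A (Suc i) (Suc i) = x * A i i"
   and inv3: "\<And>i j. 0 < t \<Longrightarrow> i < d1 \<Longrightarrow> j < d2 \<Longrightarrow> t \<le> i \<Longrightarrow> t \<le> j \<Longrightarrow> \<exists>x\<in>R. A i j = x * A (t - 1) (t - 1)"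
    using A(2) unfolding snfinv_def by blast+
  have AR: "\<And>i j. i < d1 \<Longrightarrow> j < d2 \<Longrightarrow> A i j \<in> R" using A(1) unfolding Rmat_def by blast
  define Bk where "Bk = (\<lambda>(i, j). A i j) ` ({i. t \<le> i \<and> i < d1} \<times> {j. t \<le> j \<and> j < d2})"
  have "finite Bk" unfolding Bk_def by simp
  moreover have "Bk \<noteq> {}" unfolding Bk_def using t by auto
  moreover have "Bk \<subseteq> R" unfolding Bk_def using AR by auto
  ultimately obtain pv where pv: "pv \<in> Bk" "\<forall>x\<in>Bk. \<exists>r\<in>R. x = pv * r" using principal_aux by blast
  obtain p q where pq: "t \<le> p" "p < d1" "t \<le> q" "q < d2" "pv = A p q" using pv(1) unfolding Bk_def by auto
  define A1 where "A1 i j = A (tr t p i) (tr t q j)" for i j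
  have e1: "eqvm d1 d2 A A1" unfolding A1_def using t pq by (intro eqvm_perm) auto
  have trl: "tr t p i = i" if "i < t" for i using that pq unfolding tr_def by auto
  have trl2: "tr t q j = j" if "j < t" for j using that pq unfolding tr_def by auto
  have trb: "t \<le> tr t p i \<and> tr t p i < d1" if "t \<le> i" "i < d1" for i using that pq t unfolding tr_def by auto
  have trb2: "t \<le> tr t q j \<and> tr t q j < d2" if "t \<le> j" "j < d2" for j using that pq t unfolding tr_def by auto
  have A1R: "A1 i j \<in> R" if "i < d1" "j < d2" for i j
    unfolding A1_def using that AR tr_lt t pq by auto
  have A1tt: "A1 t t = pv" unfolding A1_def tr_def using pq by simp
  have A1blk: "\<exists>x\<in>R. A1 i j = pv * x" if "t \<le> i" "i < d1" "t \<le> j" "j < d2" for i j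
  proof -
    have "A1 i j \<in> Bk" unfolding A1_def Bk_def using trb[OF that(1,2)] trb2[OF that(3,4)] by auto
    then show ?thesis using pv(2) by blast
  qed
  have A1off: "A1 i j = 0" if "i < d1" "j < d2" "i < t \<or> j < t" "i \<noteq> j" for i j
  proof (cases "i < t")
    case True
    then have "tr t q j \<noteq> i" using that(4) trl2[OF True] tr_eq[of i t q j] by metis
    moreover have "tr t q j < d2" using tr_lt t pq that by auto
    ultimately show ?thesis unfolding A1_def trl[OF True] using inv1 True that(1) by blast
  next
    case False
    then have jt: "j < t" using that by simp
    then have "tr t p i \<noteq> j" using that(4) trl[OF jt] tr_eq[of j t p i] by metis
    moreover have "tr t p i < d1" using tr_lt t pq that by auto
    ultimately show ?thesis unfolding A1_def trl2[OF jt] using inv1 jt that(2) by blast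
  qed
  have A1diag: "A1 i i = A i i" if "i < t" for i unfolding A1_def using trl[OF that] trl2[OF that] by simp
  define xr where "xr i = (SOME x. x \<in> R \<and> A1 i t = pv * x)" for i
  have xr: "xr i \<in> R \<and> A1 i t = pv * xr i" if "t \<le> i" "i < d1" for i
  proof -
    have "\<exists>x. x \<in> R \<and> A1 i t = pv * x" using A1blk[OF that order.refl t(2)] by blast
    then show ?thesis unfolding xr_def by (rule someI_ex)
  qed
  define r where "r i = (if t < i \<and> i < d1 then - xr i else 0)" for i
  have rR: "\<forall>i. r i \<in> R" unfolding r_def using xr by auto
  define A2 where "A2 i j = A1 i j + (if t < i then r i * A1 t j else 0)" for i j
  have e2: "eqvm d1 d2 A1 A2" unfolding A2_def by (rule eqvm_rowop[OF t(1) rR])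
  have A2up: "A2 i j = A1 i j" if "\<not> t < i" for i j unfolding A2_def using that by simp
  have A2col: "A2 i t = 0" if "t < i" "i < d1" for i
    unfolding A2_def r_def using that xr[of i] A1tt by (simp add: algebra_simps)
  have A2left: "A2 i j = 0" if "t < i" "i < d1" "j < t" for i j
    unfolding A2_def using that A1off[of i j] A1off[of t j] t by simp
  have A2blk: "\<exists>x\<in>R. A2 i j = pv * x" if hyp: "t < i" "i < d1" "t \<le> j" "j < d2" for i j
  proof -
    obtain x where x: "x \<in> R" "A1 i j = pv * x" using A1blk[of i j] hyp by fastforce
    obtain y where y: "y \<in> R" "A1 t j = pv * y" using A1blk[of t j] hyp t by fastforce
    have "A2 i j = pv * (x + r i * y)" unfolding A2_def using hyp x y by (simp add: algebra_simps)
    moreover have "x + r i * y \<in> R" using x y rR by simp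
    ultimately show ?thesis by blast
  qed
  have A2R: "A2 i j \<in> R" if "i < d1" "j < d2" for i j
    unfolding A2_def using A1R that rR t by simp
  define ys where "ys j = (SOME y. y \<in> R \<and> A1 t j = pv * y)" for j
  have ys: "ys j \<in> R \<and> A1 t j = pv * ys j" if "t \<le> j" "j < d2" for j
  proof -
    have "\<exists>y. y \<in> R \<and> A1 t j = pv * y" using A1blk[OF order.refl t(1) that] by blast
    then show ?thesis unfolding ys_def by (rule someI_ex)
  qed
  define s where "s j = (if t < j \<and> j < d2 then - ys j else 0)" for j
  have sR: "\<forall>j. s j \<in> R" unfolding s_def using ys by auto
  define A3 where "A3 i j = A2 i j + (if t < j then A2 i t * s j else 0)" for i j
  have e3: "eqvm d1 d2 A2 A3" unfolding A3_def by (rule eqvm_colop[OF t(2) sR])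
  have A2it: "A2 i t = 0" if "i \<noteq> t" "i < d1" for i
  proof (cases "t < i")
    case True then show ?thesis using A2col that by simp
  next
    case False
    then have "i < t" using that by simp
    then show ?thesis using A2up[OF False] A1off[of i t] that t by simp
  qed
  have A3eq: "A3 i j = A2 i j" if "i \<noteq> t" "i < d1" for i j unfolding A3_def using A2it[OF that] by simp
  have A3row: "A3 t j = 0" if "t < j" "j < d2" for j
    unfolding A3_def s_def using that ys[of j] A2up[of t] A1tt by (simp add: algebra_simps)
  have A3rowl: "A3 t j = A1 t j" if "\<not> t < j" for j unfolding A3_def using that A2up[of t] by simp
  have A3R: "Rmat d1 d2 A3" unfolding Rmat_def A3_def using A2R sR t by simp
  have A3diag: "A3 i i = A i i" if "i < t" for i using A3eq[of i i] that t A2up[of i] A1diag by simp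
  have A3tt: "A3 t t = pv" using A3rowl A1tt by simp
  have "snfinv d1 d2 (Suc t) A3"
    unfolding snfinv_def
  proof (intro conjI allI impI)
    fix i j assume ij: "i < d1" "j < d2" "(i < Suc t \<or> j < Suc t) \<and> i \<noteq> j"
    show "A3 i j = 0"
    proof (cases "i = t")
      case True
      show ?thesis
      proof (cases "t < j")
        case True then show ?thesis using A3row ij \<open>i = t\<close> by simp
      next
        case False
        then show ?thesis using A3rowl[OF False] A1off[of t j] ij \<open>i = t\<close> t by simp
      qed
    next
      case False
      then have "A3 i j = A2 i j" using A3eq ij by simp
      moreover have "A2 i j = 0"
      proof (cases "t < i")
        case True
        then have "j \<le> t" using ij by simp
        then show ?thesis using A2col A2left True ij by (cases "j = t") auto
      next
        case f2: False
        then have "i < t" using False by simp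
        then show ?thesis using A2up[OF f2] A1off ij by simp
      qed
      ultimately show ?thesis by simp
    qed
  next
    fix i assume "Suc i < Suc t"
    then have it: "i < t" by simp
    show "\<exists>x\<in>R. A3 (Suc i) (Suc i) = x * A3 i i"
    proof (cases "Suc i < t")
      case True
      then show ?thesis using inv2 A3diag it by simp
    next
      case False
      then have st: "Suc i = t" using it by simp
      obtain x where "x \<in> R" "A p q = x * A (t - 1) (t - 1)" using inv3[of p q] pq st by auto
      then show ?thesis using A3tt A3diag[OF it] pq st by auto
    qed
  next
    fix i j assume ij: "i < d1" "j < d2" "Suc t \<le> i \<and> Suc t \<le> j"
    then have "A3 i j = A2 i j" using A3eq by simp
    moreover have "t < i" "t \<le> j" using ij by auto
    then obtain x where "x \<in> R" "A2 i j = pv * x" using A2blk[of i j] ij by blast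
    ultimately show "\<exists>x\<in>R. A3 i j = x * A3 (Suc t - 1) (Suc t - 1)"
      using A3tt by (auto simp: mult.commute)
  qed
  moreover have "eqvm d1 d2 A A3" using e1 e2 e3 eqvm_trans by blast
  ultimately show ?thesis using A3R by blast
qed

lemma snf_t:
  assumes "Rmat d1 d2 C"
  shows "t \<le> min d1 d2 \<Longrightarrow> \<exists>A. eqvm d1 d2 C A \<and> Rmat d1 d2 A \<and> snfinv d1 d2 t A"
proof (induction t)
  case 0
  then show ?case using assms eqvm_refl unfolding snfinv_def by blast
next
  case (Suc t)
  then obtain A where A: "eqvm d1 d2 C A" "Rmat d1 d2 A" "snfinv d1 d2 t A" by auto
  obtain A' where "eqvm d1 d2 A A'" "Rmat d1 d2 A'" "snfinv d1 d2 (Suc t) A'"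
    using snf_step[OF A(2,3)] Suc.prems by auto
  then show ?case using A(1) eqvm_trans by blast
qed

lemma snf_exists:
  assumes "Rmat d1 d2 C"
  shows "\<exists>P Q D. R_invertible R d1 P \<and> R_invertible R d2 Q \<and>
      (\<forall>i<d1. \<forall>j<d2. D i j = mat_mult d2 (mat_mult d1 P C) Q i j) \<and>
      (\<forall>i<d1. \<forall>j<d2. i \<noteq> j \<longrightarrow> D i j = 0) \<and>
      (\<forall>i. i + 1 < min d1 d2 \<longrightarrow> (\<exists>x\<in>R. D (i + 1) (i + 1) = x * D i i))"
proof -
  obtain A where A: "eqvm d1 d2 C A" "snfinv d1 d2 (min d1 d2) A" using snf_t[OF assms, of "min d1 d2"] by auto
  from A(1)[unfolded eqvm_def] obtain P Q where PQ: "R_invertible R d1 P" "R_invertible R d2 Q"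
    "\<forall>i<d1. \<forall>j<d2. A i j = mat_mult d2 (mat_mult d1 P C) Q i j"
    by (elim exE conjE) (rule that; assumption)
  have "\<forall>i<d1. \<forall>j<d2. i \<noteq> j \<longrightarrow> A i j = 0"
  proof (intro allI impI)
    fix i j assume "i < d1" "j < d2" "i \<noteq> j"
    then have "i < min d1 d2 \<or> j < min d1 d2" by auto
    then show "A i j = 0" using A(2) \<open>i < d1\<close> \<open>j < d2\<close> \<open>i \<noteq> j\<close> unfolding snfinv_def by blast
  qed
  moreover have "\<forall>i. i + 1 < min d1 d2 \<longrightarrow> (\<exists>x\<in>R. A (i + 1) (i + 1) = x * A i i)"
    using A(2) unfolding snfinv_def by simp
  ultimately show ?thesis using PQ by blast
qed

end

lemma coord_props:
  assumes "R_basis R m w"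
  shows "(\<forall>i<m. coord R m w y i \<in> R) \<and> (\<forall>i\<ge>m. coord R m w y i = 0) \<and> y = (\<Sum>i<m. coord R m w y i * w i)"
  unfolding coord_def using assms[unfolded R_basis_def, rule_format, of y] by (rule theI')

lemma coord_eq:
  assumes "R_basis R m w" "\<forall>i<m. r i \<in> R" "\<forall>i\<ge>m. r i = 0" "y = (\<Sum>i<m. r i * w i)"
  shows "coord R m w y = r"
  unfolding coord_def
proof (rule the1_equality)
  show "\<exists>!r. (\<forall>i<m. r i \<in> R) \<and> (\<forall>i\<ge>m. r i = 0) \<and> y = (\<Sum>i<m. r i * w i)"
    using assms(1) unfolding R_basis_def by simp
  show "(\<forall>i<m. r i \<in> R) \<and> (\<forall>i\<ge>m. r i = 0) \<and> y = (\<Sum>i<m. r i * w i)"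
    using assms(2-4) by simp
qed

context ringR begin

lemma coord_lin:
  assumes B: "R_basis R m w" and q: "\<forall>l<s. q l \<in> R"
  shows "coord R m w (\<Sum>l<s. q l * u l) = (\<lambda>i. \<Sum>l<s. q l * coord R m w (u l) i)"
proof (rule coord_eq[OF B])
  show "\<forall>i<m. (\<Sum>l<s. q l * coord R m w (u l) i) \<in> R"
    using coord_props[OF B] q by (auto intro!: R_sum)
  show "\<forall>i\<ge>m. (\<Sum>l<s. q l * coord R m w (u l) i) = 0"
    using coord_props[OF B] by simp
  have "(\<Sum>l<s. q l * u l) = (\<Sum>l<s. q l * (\<Sum>i<m. coord R m w (u l) i * w i))"
  proof (rule sum.cong[OF refl])
    fix l show "q l * u l = q l * (\<Sum>i<m. coord R m w (u l) i * w i)"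
      using coord_props[OF B, of "u l"] by simp
  qed
  also have "\<dots> = (\<Sum>l<s. \<Sum>i<m. q l * coord R m w (u l) i * w i)"
    by (simp add: sum_distrib_left mult.assoc)
  also have "\<dots> = (\<Sum>i<m. \<Sum>l<s. q l * coord R m w (u l) i * w i)" by (rule sum.swap)
  also have "\<dots> = (\<Sum>i<m. (\<Sum>l<s. q l * coord R m w (u l) i) * w i)"
    by (simp add: sum_distrib_right)
  finally show "(\<Sum>l<s. q l * u l) = (\<Sum>i<m. (\<Sum>l<s. q l * coord R m w (u l) i) * w i)" .
qed

lemma coord_zero:
  assumes B: "R_basis R m w" "\<forall>i<m. coord R m w y i = 0"
  shows "y = 0"
  using coord_props[OF B(1), of y] B(2) by simp

lemma block:
  assumes ex: "\<exists>m w. R_basis R m w \<and> Rmat m s (\<lambda>i' l. coord R m w (u l) i')"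
  shows "\<exists>Qm Z. R_invertible R s Qm \<and> Z \<subseteq> {..<s} \<and> s - snf_rank R u s \<le> card Z \<and>
            (\<forall>j\<in>Z. (\<Sum>l<s. Qm l j * u l) = 0)"
proof -
  define Pr where "Pr r \<longleftrightarrow> (\<exists>m w P Q D.
      R_basis R m w \<and> R_invertible R m P \<and> R_invertible R s Q \<and>
      (\<forall>i<m. \<forall>j<s. D i j =
          mat_mult s (mat_mult m P (\<lambda>i' l. coord R m w (u l) i')) Q i j) \<and>
      (\<forall>i<m. \<forall>j<s. i \<noteq> j \<longrightarrow> D i j = 0) \<and>
      (\<forall>i. i + 1 < min m s \<longrightarrow> (\<exists>x\<in>R. D (i + 1) (i + 1) = x * D i i)) \<and>
      r = card {i. i < min m s \<and> D i i \<noteq> 0})" for r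
  have "\<exists>r. Pr r"
  proof -
    obtain m w where mw: "R_basis R m w" "Rmat m s (\<lambda>i' l. coord R m w (u l) i')" using ex by blast
    obtain P Q D where PQD: "R_invertible R m P \<and> R_invertible R s Q \<and>
      (\<forall>i<m. \<forall>j<s. D i j = mat_mult s (mat_mult m P (\<lambda>i' l. coord R m w (u l) i')) Q i j) \<and>
      (\<forall>i<m. \<forall>j<s. i \<noteq> j \<longrightarrow> D i j = 0) \<and>
      (\<forall>i. i + 1 < min m s \<longrightarrow> (\<exists>x\<in>R. D (i + 1) (i + 1) = x * D i i))"
      using snf_exists[OF mw(2)] by blast
    have "Pr (card {i. i < min m s \<and> D i i \<noteq> 0})" unfolding Pr_def
      apply (rule exI[of _ m], rule exI[of _ w], rule exI[of _ P], rule exI[of _ Q], rule exI[of _ D])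
      using PQD mw(1) by (intro conjI refl) blast+
    then show ?thesis by (rule exI)
  qed
  then have "Pr (snf_rank R u s)" unfolding snf_rank_def Pr_def by (rule someI_ex)
  then obtain m w P Q D where mw: "R_basis R m w" and P: "R_invertible R m P" and Q: "R_invertible R s Q"
    and D: "\<forall>i<m. \<forall>j<s. D i j = mat_mult s (mat_mult m P (\<lambda>i' l. coord R m w (u l) i')) Q i j"
    and Doff: "\<forall>i<m. \<forall>j<s. i \<noteq> j \<longrightarrow> D i j = 0"
    and rk: "snf_rank R u s = card {i. i < min m s \<and> D i i \<noteq> 0}"
    unfolding Pr_def by (elim exE conjE) (rule that; assumption)
  define Cm where "Cm = (\<lambda>i' l. coord R m w (u l) i')"
  obtain Pi where Pi: "\<forall>i<m. \<forall>j<m. mat_mult m Pi P i j = (if i = j then 1 else 0)"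
    using P unfolding R_invertible_def by (elim exE conjE) (rule that; assumption)
  define Z where "Z = {j. j < s \<and> \<not> (j < min m s \<and> D j j \<noteq> 0)}"
  have Zs: "Z \<subseteq> {..<s}" unfolding Z_def by auto
  have "Z = {..<s} - {i. i < min m s \<and> D i i \<noteq> 0}" unfolding Z_def by auto
  moreover have "{i. i < min m s \<and> D i i \<noteq> 0} \<subseteq> {..<s}" by auto
  moreover have "finite {i. i < min m s \<and> D i i \<noteq> 0}" by simp
  ultimately have cZ: "card Z = s - snf_rank R u s" unfolding rk
    using card_Diff_subset[of "{i. i < min m s \<and> D i i \<noteq> 0}" "{..<s}"] by simp
  have QR: "\<forall>l<s. \<forall>j<s. Q l j \<in> R" using Q unfolding R_invertible_def by blast
  have "(\<Sum>l<s. Q l j * u l) = 0" if jZ: "j \<in> Z" for j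
  proof -
    have js: "j < s" using jZ Z_def by auto
    have Dz: "D i j = 0" if "i < m" for i
    proof (cases "i = j")
      case True then show ?thesis using jZ that js unfolding Z_def by auto
    next
      case False then show ?thesis using Doff that js by blast
    qed
    have "coord R m w (\<Sum>l<s. Q l j * u l) i = 0" if im: "i < m" for i
    proof -
      have "coord R m w (\<Sum>l<s. Q l j * u l) i = (\<Sum>l<s. Q l j * Cm i l)"
        using coord_lin[OF mw, of s "\<lambda>l. Q l j" u] QR js unfolding Cm_def by simp
      also have "\<dots> = mat_mult s Cm Q i j" unfolding mat_mult_def by (simp add: mult.commute)
      also have "\<dots> = mat_mult m idm (mat_mult s Cm Q) i j" using im by (simp add: mm_idm_left)
      also have "\<dots> = mat_mult m (mat_mult m Pi P) (mat_mult s Cm Q) i j"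
        by (rule mm_cong) (use Pi im in \<open>simp_all add: idm_def\<close>)
      also have "\<dots> = mat_mult m Pi (mat_mult s (mat_mult m P Cm) Q) i j"
        by (simp add: mm_assoc)
      also have "\<dots> = mat_mult m Pi D i j"
        by (rule mm_cong) (use D js in \<open>simp_all add: Cm_def\<close>)
      also have "\<dots> = 0" unfolding mat_mult_def using Dz by simp
      finally show ?thesis .
    qed
    then show ?thesis using coord_zero[OF mw] by simp
  qed
  then show ?thesis using Q Zs cZ by (intro exI[of _ Q] exI[of _ Z]) simp
qed

end

context ringS begin

lemma basis_theta: "R_basis R md (\<lambda>i. \<theta> ^ i)"
  unfolding R_basis_def
proof
  fix s
  obtain p where p: "Rp p" "degree p < md" "poly p \<theta> = s" using rep_ex by blast
  have sp: "s = (\<Sum>i<md. coeff p i * \<theta> ^ i)"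
  proof -
    have "s = (\<Sum>i\<le>degree p. coeff p i * \<theta> ^ i)" using p(3) poly_altdef by metis
    also have "\<dots> = (\<Sum>i<md. coeff p i * \<theta> ^ i)"
      by (rule sum.mono_neutral_left) (use p(2) in \<open>auto simp: coeff_eq_0\<close>)
    finally show ?thesis .
  qed
  show "\<exists>!r. (\<forall>i<md. r i \<in> R) \<and> (\<forall>i\<ge>md. r i = 0) \<and> s = (\<Sum>i<md. r i * \<theta> ^ i)"
  proof (rule ex1I[of _ "coeff p"])
    show "(\<forall>i<md. coeff p i \<in> R) \<and> (\<forall>i\<ge>md. coeff p i = 0) \<and> s = (\<Sum>i<md. coeff p i * \<theta> ^ i)"
      using p sp unfolding Rp_def by (auto simp: coeff_eq_0)
  next
    fix r assume r: "(\<forall>i<md. r i \<in> R) \<and> (\<forall>i\<ge>md. r i = 0) \<and> s = (\<Sum>i<md. r i * \<theta> ^ i)"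
    define p1 where "p1 = (\<Sum>i<md. monom (r i) i)"
    have c1: "coeff p1 n = r n" for n
    proof -
      have "coeff p1 n = (\<Sum>i<md. if i = n then r i else 0)" unfolding p1_def coeff_sum
        by (rule sum.cong) (auto simp: coeff_monom)
      then show ?thesis using r by (cases "n < md") auto
    qed
    have "Rp p1" unfolding Rp_def c1 using r by (metis R0 not_le)
    moreover have "degree p1 < md"
    proof -
      have "degree p1 \<le> md - 1" by (rule degree_le) (use r md1 in \<open>auto simp: c1\<close>)
      then show ?thesis using md1 by linarith
    qed
    moreover have "poly p1 \<theta> = s" unfolding p1_def using r by (simp add: poly_sum poly_monom)
    ultimately have "p1 = p" using rep_uniq p by metis
    then show "r = coeff p" using c1 by auto
  qed
qed

lemma block_S: "\<exists>Qm Z. R_invertible R s Qm \<and> Z \<subseteq> {..<s} \<and> s - snf_rank R u s \<le> card Z \<and>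
            (\<forall>j\<in>Z. (\<Sum>l<s. Qm l j * u l) = 0)"
proof (rule block)
  show "\<exists>m w. R_basis R m w \<and> Rmat m s (\<lambda>i' l. coord R m w (u l) i')"
  proof (intro exI conjI)
    show "R_basis R md (\<lambda>i. \<theta> ^ i)" by (rule basis_theta)
    show "Rmat md s (\<lambda>i' l. coord R md (\<lambda>i. \<theta> ^ i) (u l) i')"
      unfolding Rmat_def using coord_props[OF basis_theta] by simp
  qed
qed

end

lemma (in skew) cond_sym:
  fixes a :: "nat \<Rightarrow> 'a" and l :: nat
  assumes ci: "\<forall>i j b. i < j \<and> j < l \<and> b dvd 1 \<longrightarrow> (a i - \<sigma> b * a j * inv_S b) dvd 1"
  shows "\<forall>i j b. i < l \<and> j < l \<and> i \<noteq> j \<and> b dvd 1 \<longrightarrow> (a i - \<sigma> b * a j * inv_S b) dvd 1"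
proof (intro allI impI)
  fix i j :: nat and b :: 'a assume h: "i < l \<and> j < l \<and> i \<noteq> j \<and> b dvd 1"
  show "(a i - \<sigma> b * a j * inv_S b) dvd 1"
  proof (cases "i < j")
    case True then show ?thesis using ci h by blast
  next
    case False
    then have ji: "j < i" using h by simp
    define bi where "bi = inv_S b"
    have b1: "b * bi = 1" unfolding bi_def using h inv_S_unit by blast
    then have bi1: "bi dvd 1" by (metis dvdI mult.commute)
    have ibi: "inv_S bi = b" using b1 by (intro inv_S_eq) (simp add: mult.commute)
    have sb: "\<sigma> b * \<sigma> bi = 1" using b1 s_mult s_one by metis
    have U: "(a j - \<sigma> bi * a i * b) dvd 1" using ci[rule_format, of j i bi] ji h bi1 ibi by simp
    have "\<sigma> b * (a j - \<sigma> bi * a i * b) * bi = \<sigma> b * a j * bi - (\<sigma> b * \<sigma> bi) * a i * (b * bi)"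
      by (simp add: algebra_simps)
    also have "\<dots> = \<sigma> b * a j * bi - a i" using sb b1 by simp
    finally have e: "a i - \<sigma> b * a j * inv_S b = - (\<sigma> b * (a j - \<sigma> bi * a i * b) * bi)"
      unfolding bi_def by simp
    have "(\<sigma> b) dvd 1" using sb by (metis dvdI)
    then have "(\<sigma> b * (a j - \<sigma> bi * a i * b)) dvd 1" using U mult_dvd_mono[of "\<sigma> b" 1 "a j - \<sigma> bi * a i * b" 1] by simp
    then have "(\<sigma> b * (a j - \<sigma> bi * a i * b) * bi) dvd 1" using bi1 mult_dvd_mono[of _ 1 bi 1] by simp
    then show ?thesis unfolding e by simp
  qed
qed

theorem lemma8:
  fixes \<sigma> :: "'a::{comm_ring_1,finite} \<Rightarrow> 'a"
    and R :: "'a set"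
    and l k :: nat and nn :: "nat \<Rightarrow> nat"
    and a :: "nat \<Rightarrow> 'a" and \<beta> c e r :: "nat \<Rightarrow> nat \<Rightarrow> 'a"
    and F H L Q :: "'a poly"
  assumes aut: "ring_automorphism \<sigma>"
    and R_fix: "R = {x. \<sigma> x = x}"
    and chain: "chain_ring R"
    and ext: "\<exists>(\<theta>::'a) (h::'a poly) (m::nat).
        m \<ge> 1 \<and> lead_coeff h = 1 \<and> degree h = m \<and> set (coeffs h) \<subseteq> R \<and> poly h \<theta> = 0 \<and>
        (\<forall>s. \<exists>!p. set (coeffs p) \<subseteq> R \<and> degree p < m \<and> poly p \<theta> = s) \<and>
        \<not> (\<exists>f g. lead_coeff f = 1 \<and> lead_coeff g = 1 \<and> degree f \<ge> 1 \<and> degree g \<ge> 1 \<and>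
               set (coeffs f) \<subseteq> R \<and> set (coeffs g) \<subseteq> R \<and>
               (\<forall>i. coeff (h - f * g) i \<in> nonunits R))"
    and galois: "\<forall>\<tau>. ring_automorphism \<tau> \<and> (\<forall>x\<in>R. \<tau> x = x) \<longrightarrow> (\<exists>i. \<tau> = \<sigma> ^^ i)"
    and frob: "\<forall>y. \<sigma> y - y ^ residue_card R \<in> nonunits UNIV"
    and a_units: "\<forall>i<l. a i dvd 1"
    and cond_i: "\<forall>i j b. i < j \<and> j < l \<and> b dvd 1 \<longrightarrow> (a i - \<sigma> b * a j * inv_S b) dvd 1"
    and cond_ii: "\<forall>i<l. \<forall>x :: nat \<Rightarrow> 'a. (\<forall>j<nn i. x j \<in> R) \<and> (\<Sum>j<nn i. x j * \<beta> i j) = 0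
                        \<longrightarrow> (\<forall>j<nn i. x j = 0)"
    and k_pos: "1 \<le> k" and k_le: "k \<le> (\<Sum>i<l. nn i) - 1"
    and code: "lrs_code \<sigma> k l nn a \<beta> c"
    and wt: "sum_rank_wt R l nn e \<le> ((\<Sum>i<l. nn i) - k) div 2"
    and rdef: "\<forall>i<l. \<forall>j<nn i. r i j = c i j + e i j"
    and F: "degree F < (\<Sum>i<l. nn i)"
        "\<forall>i<l. \<forall>j<nn i. skew_eval \<sigma> F (\<sigma> (\<beta> i j) * a i * inv_S (\<beta> i j)) = c i j * inv_S (\<beta> i j)"
    and H: "degree H < (\<Sum>i<l. nn i)"
        "\<forall>i<l. \<forall>j<nn i. skew_eval \<sigma> H (\<sigma> (\<beta> i j) * a i * inv_S (\<beta> i j)) = r i j * inv_S (\<beta> i j)"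
    and L_monic: "lead_coeff L = 1"
    and L_deg: "degree L \<le> ((\<Sum>i<l. nn i) - k) div 2"
    and Q_deg: "degree Q \<le> ((\<Sum>i<l. nn i) - k) div 2 + k - 1"
    and interp: "\<forall>i<l. \<forall>j<nn i. skew_eval \<sigma> (skew_mult \<sigma> L H) (\<sigma> (\<beta> i j) * a i * inv_S (\<beta> i j))
                                = skew_eval \<sigma> Q (\<sigma> (\<beta> i j) * a i * inv_S (\<beta> i j))"
  shows "Q = skew_mult \<sigma> L F"
proof -
  from ext obtain \<theta> h md where md1: "md \<ge> 1" and hlc: "lead_coeff h = 1" and hdeg: "degree h = md"
    and hR: "set (coeffs h) \<subseteq> R" and hroot: "poly h \<theta> = 0"
    and rep: "\<forall>s. \<exists>!p. set (coeffs p) \<subseteq> R \<and> degree p < md \<and> poly p \<theta> = s"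
    and irr: "\<not> (\<exists>f g. lead_coeff f = 1 \<and> lead_coeff g = 1 \<and> degree f \<ge> 1 \<and> degree g \<ge> 1 \<and>
               set (coeffs f) \<subseteq> R \<and> set (coeffs g) \<subseteq> R \<and>
               (\<forall>i. coeff (h - f * g) i \<in> nonunits R))"
    by (elim exE conjE) (rule that; assumption)
  interpret S: ringS \<sigma> R \<theta> h md
    by (intro ringS.intro ringR.intro skew.intro ringR_axioms.intro ringS_axioms.intro aut R_fix chain
        md1 hlc hdeg hR hroot rep irr)
  have condi: "\<forall>i j b. i < l \<and> j < l \<and> i \<noteq> j \<and> b dvd 1 \<longrightarrow> (a i - \<sigma> b * a j * inv_S b) dvd 1"
    by (rule S.cond_sym[OF cond_i])
  interpret B: rb \<sigma> R \<theta> h md a l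
    by (intro rb.intro rb_axioms.intro S.ringS_axioms a_units condi)

  define n where "n = (\<Sum>i<l. nn i)"
  define t where "t = (n - k) div 2"
  have bindep: "indep R (\<beta> i) (nn i)" if "i < l" for i
    using cond_ii that unfolding indep_def by blast
  have bunit: "\<beta> i j dvd 1" if "i < l" "j < nn i" for i j
    using S.indep_unit[OF bindep[OF that(1)] that(2)] .
  have conv: "skew_eval \<sigma> P (\<sigma> (\<beta> i j) * a i * inv_S (\<beta> i j)) * \<beta> i j = Phi \<sigma> P (a i) (\<beta> i j)"
    if "i < l" "j < nn i" for P i j
    using S.Phi_conj[OF inv_S_unit[OF bunit[OF that]]] S.skew_eval_Phi by simp
  have binv: "x * inv_S (\<beta> i j) * \<beta> i j = x" if "i < l" "j < nn i" for x i j
    using inv_S_unit[OF bunit[OF that]] by (simp add: algebra_simps)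
  have PhiF: "Phi \<sigma> F (a i) (\<beta> i j) = c i j" if "i < l" "j < nn i" for i j
    using conv[OF that, of F] F(2) that binv[OF that] by simp
  have PhiH: "Phi \<sigma> H (a i) (\<beta> i j) = c i j + e i j" if "i < l" "j < nn i" for i j
    using conv[OF that, of H] H(2) that binv[OF that] rdef by simp
  have PhiLH: "Phi \<sigma> (skew_mult \<sigma> L H) (a i) (\<beta> i j) = Phi \<sigma> Q (a i) (\<beta> i j)" if "i < l" "j < nn i" for i j
    using conv[OF that, of "skew_mult \<sigma> L H"] conv[OF that, of Q] interp that by simp
  obtain u where u: "\<forall>i<l. \<forall>j<nn i. c i j = (\<Sum>s<k. u s * D_op \<sigma> (a i) s (\<beta> i j))"
    using code unfolding lrs_code_def by blast
  define f where "f = (\<Sum>s<k. monom (u s) s)"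
  have cf: "coeff f m = (if m < k then u m else 0)" for m
  proof -
    have "coeff f m = (\<Sum>s<k. if s = m then u s else 0)" unfolding f_def coeff_sum
      by (rule sum.cong) (auto simp: coeff_monom)
    then show ?thesis by simp
  qed
  have df: "degree f \<le> k - 1" by (rule degree_le) (auto simp: cf)
  have dfk: "degree f < k" using df k_pos by linarith
  have Phif: "Phi \<sigma> f (a i) g = (\<Sum>s<k. u s * (\<sigma>^^s) g * norm_op \<sigma> s (a i))" for i g
    using S.Phi_bound[OF dfk] by (simp add: cf)
  have Phifb: "Phi \<sigma> f (a i) (\<beta> i j) = c i j" if "i < l" "j < nn i" for i j
    using u that unfolding Phif D_op_def by (simp add: mult.assoc)
  have nk: "k < n" using k_pos k_le unfolding n_def by linarith
  have Ff: "F = f"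
  proof -
    have "F - f = 0"
    proof (rule B.RB[of \<beta> nn])
      show "\<forall>i<l. indep R (\<beta> i) (nn i)" using bindep by blast
      show "\<forall>i<l. \<forall>j<nn i. Phi \<sigma> (F - f) (a i) (\<beta> i j) = 0"
        using PhiF Phifb by (simp add: S.Phi_diff)
      have "degree (F - f) \<le> max (degree F) (degree f)" by (rule degree_diff_le_max)
      then show "degree (F - f) < (\<Sum>i<l. nn i)" using F(1) dfk nk unfolding n_def by linarith
    qed
    then show ?thesis by simp
  qed
  define G where "G = Q - skew_mult \<sigma> L f"
  have PhiG: "Phi \<sigma> G (a i) (\<beta> i j) = Phi \<sigma> L (a i) (e i j)" if "i < l" "j < nn i" for i j
  proof -
    have q1: "Phi \<sigma> Q (a i) (\<beta> i j) = Phi \<sigma> L (a i) (c i j + e i j)"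
      using PhiLH[OF that] PhiH[OF that] S.Phi_comp[of L H "a i" "\<beta> i j"] by simp
    have q2: "Phi \<sigma> (skew_mult \<sigma> L f) (a i) (\<beta> i j) = Phi \<sigma> L (a i) (c i j)"
      using Phifb[OF that] S.Phi_comp[of L f "a i" "\<beta> i j"] by simp
    have "Phi \<sigma> G (a i) (\<beta> i j) = Phi \<sigma> L (a i) (c i j + e i j) - Phi \<sigma> L (a i) (c i j)"
      unfolding G_def S.Phi_diff q1 q2 ..
    then show ?thesis by (simp add: S.Phi_add_g)
  qed
  have degG: "degree G \<le> t + k - 1"
  proof -
    have "degree (skew_mult \<sigma> L f) \<le> degree L + degree f" by (rule S.degree_skew_mult)
    then have "degree (skew_mult \<sigma> L f) \<le> t + k - 1" using L_deg df k_pos unfolding t_def n_def by linarith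
    moreover have "degree G \<le> max (degree Q) (degree (skew_mult \<sigma> L f))" unfolding G_def by (rule degree_diff_le_max)
    ultimately show ?thesis using Q_deg unfolding t_def n_def by linarith
  qed
  have "G = 0"
  proof -
  have ex: "\<forall>i. \<exists>QZ. R_invertible R (nn i) (fst QZ) \<and> snd QZ \<subseteq> {..<nn i} \<and>
      nn i - snf_rank R (\<lambda>j. e i j) (nn i) \<le> card (snd QZ) \<and>
      (\<forall>j\<in>snd QZ. (\<Sum>q<nn i. fst QZ q j * e i q) = 0)"
  proof
    fix i
    obtain Qm Z where "R_invertible R (nn i) Qm \<and> Z \<subseteq> {..<nn i} \<and>
      nn i - snf_rank R (\<lambda>j. e i j) (nn i) \<le> card Z \<and> (\<forall>j\<in>Z. (\<Sum>q<nn i. Qm q j * e i q) = 0)"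
      using S.block_S[of "nn i" "\<lambda>j. e i j"] by blast
    then show "\<exists>QZ. R_invertible R (nn i) (fst QZ) \<and> snd QZ \<subseteq> {..<nn i} \<and>
      nn i - snf_rank R (\<lambda>j. e i j) (nn i) \<le> card (snd QZ) \<and>
      (\<forall>j\<in>snd QZ. (\<Sum>q<nn i. fst QZ q j * e i q) = 0)" by (intro exI[of _ "(Qm, Z)"]) simp
  qed
  then obtain QZ where QZ: "\<forall>i. R_invertible R (nn i) (fst (QZ i)) \<and> snd (QZ i) \<subseteq> {..<nn i} \<and>
      nn i - snf_rank R (\<lambda>j. e i j) (nn i) \<le> card (snd (QZ i)) \<and>
      (\<forall>j\<in>snd (QZ i). (\<Sum>q<nn i. fst (QZ i) q j * e i q) = 0)"
    using choice[OF ex] by (elim exE) (rule that)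
  define QM where "QM i = fst (QZ i)" for i
  define ZZ where "ZZ i = snd (QZ i)" for i
  have QMinv: "R_invertible R (nn i) (QM i)" for i using QZ unfolding QM_def by blast
  have ZZs: "ZZ i \<subseteq> {..<nn i}" for i using QZ unfolding ZZ_def by blast
  have ZZc: "nn i - snf_rank R (\<lambda>j. e i j) (nn i) \<le> card (ZZ i)" for i using QZ unfolding ZZ_def by blast
  have ZZe: "\<And>j. j \<in> ZZ i \<Longrightarrow> (\<Sum>q<nn i. QM i q j * e i q) = 0" for i using QZ unfolding ZZ_def QM_def by blast
  have QMR: "QM i q j \<in> R" if "q < nn i" "j < nn i" for i q j
    using QMinv[of i] that unfolding R_invertible_def by blast
  have ex2: "\<forall>i. \<exists>en. bij_betw en {..<card (ZZ i)} (ZZ i)"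
  proof
    fix i
    have "finite (ZZ i)" using ZZs[of i] finite_subset by blast
    then obtain hh where "bij_betw hh {0..<card (ZZ i)} (ZZ i)" using ex_bij_betw_nat_finite by blast
    then show "\<exists>en. bij_betw en {..<card (ZZ i)} (ZZ i)" by (intro exI[of _ hh]) (simp add: atLeast0LessThan)
  qed
  obtain en where en: "\<forall>i. bij_betw (en i) {..<card (ZZ i)} (ZZ i)" using choice[OF ex2] by (elim exE) (rule that)
  define cnt where "cnt i = card (ZZ i)" for i
  have enZ: "en i j \<in> ZZ i" if "j < cnt i" for i j using en that unfolding cnt_def bij_betw_def by blast
  have enlt: "en i j < nn i" if "j < cnt i" for i j using enZ[OF that] ZZs by blast
  define \<gamma> where "\<gamma> i j = (\<Sum>q<nn i. QM i q (en i j) * \<beta> i q)" for i j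
  have roots: "\<forall>i<l. \<forall>j<cnt i. Phi \<sigma> G (a i) (\<gamma> i j) = 0"
  proof (intro allI impI)
    fix i j assume ij: "i < l" "j < cnt i"
    have "Phi \<sigma> G (a i) (\<gamma> i j) = (\<Sum>q<nn i. QM i q (en i j) * Phi \<sigma> G (a i) (\<beta> i q))"
      unfolding \<gamma>_def S.Phi_sum_g
      by (rule sum.cong[OF refl]) (rule S.Phi_scal, use QMR enlt ij S.R_sig in auto)
    also have "\<dots> = (\<Sum>q<nn i. Phi \<sigma> L (a i) (QM i q (en i j) * e i q))"
    proof (rule sum.cong[OF refl])
      fix q assume "q \<in> {..<nn i}"
      then have qn: "q < nn i" by simp
      have "QM i q (en i j) \<in> R" using QMR qn enlt ij by blast
      then show "QM i q (en i j) * Phi \<sigma> G (a i) (\<beta> i q) = Phi \<sigma> L (a i) (QM i q (en i j) * e i q)"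
        using PhiG[OF ij(1) qn] S.Phi_scal S.R_sig by simp
    qed
    also have "\<dots> = Phi \<sigma> L (a i) (\<Sum>q<nn i. QM i q (en i j) * e i q)" by (rule S.Phi_sum_g[symmetric])
    also have "\<dots> = 0" using ZZe[OF enZ[OF ij(2)]] by simp
    finally show "Phi \<sigma> G (a i) (\<gamma> i j) = 0" .
  qed
  have indeps: "\<forall>i<l. indep R (\<gamma> i) (cnt i)"
  proof (intro allI impI)
    fix i assume il: "i < l"
    show "indep R (\<gamma> i) (cnt i)" unfolding indep_def
    proof (rule allI, rule impI)
      fix x assume x: "(\<forall>j<cnt i. x j \<in> R) \<and> (\<Sum>j<cnt i. x j * \<gamma> i j) = 0"
      define s where "s = nn i"
      define Qm where "Qm = QM i"
      define y where "y q = (\<Sum>j<cnt i. x j * Qm q (en i j))" for q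
      have yR: "\<forall>q<s. y q \<in> R"
        unfolding y_def Qm_def s_def using x QMR enlt by (auto intro!: S.R_sum)
      have "(\<Sum>j<cnt i. x j * \<gamma> i j) = (\<Sum>j<cnt i. \<Sum>q<s. x j * Qm q (en i j) * \<beta> i q)"
        unfolding \<gamma>_def s_def Qm_def by (simp add: sum_distrib_left mult.assoc)
      also have "\<dots> = (\<Sum>q<s. \<Sum>j<cnt i. x j * Qm q (en i j) * \<beta> i q)" by (rule sum.swap)
      also have "\<dots> = (\<Sum>q<s. y q * \<beta> i q)" unfolding y_def by (simp add: sum_distrib_right)
      finally have "(\<Sum>q<s. y q * \<beta> i q) = 0" using x by simp
      then have y0: "\<forall>q<s. y q = 0" using bindep[OF il] yR unfolding indep_def s_def by blast
      define v where "v q = (if q \<in> ZZ i then x (inv_into {..<cnt i} (en i) q) else 0)" for q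
      have bij: "bij_betw (en i) {..<cnt i} (ZZ i)" using en unfolding cnt_def by blast
      have Qv: "(\<Sum>q'<s. Qm q q' * v q') = y q" for q
      proof -
        have "(\<Sum>q'<s. Qm q q' * v q') = (\<Sum>q'\<in>ZZ i. Qm q q' * v q')"
          by (rule sum.mono_neutral_right) (use ZZs in \<open>auto simp: v_def s_def\<close>)
        also have "\<dots> = (\<Sum>j<cnt i. Qm q (en i j) * v (en i j))"
          by (rule sum.reindex_bij_betw[OF bij, symmetric])
        also have "\<dots> = y q" unfolding y_def v_def
        proof (rule sum.cong[OF refl])
          fix j assume "j \<in> {..<cnt i}"
          then have "en i j \<in> ZZ i" "inv_into {..<cnt i} (en i) (en i j) = j"
            using bij_betw_inv_into_left[OF bij] enZ by auto
          then show "Qm q (en i j) * (if en i j \<in> ZZ i then x (inv_into {..<cnt i} (en i) (en i j)) else 0) = x j * Qm q (en i j)"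
            by (simp add: mult.commute)
        qed
        finally show ?thesis .
      qed
      obtain Qi where Qi: "\<forall>a<s. \<forall>b<s. mat_mult s Qi Qm a b = (if a = b then 1 else 0)"
        using QMinv[of i] unfolding R_invertible_def Qm_def s_def by blast
      have v0: "v q'' = 0" if "q'' < s" for q''
      proof -
        have "(\<Sum>q'<s. (if q'' = q' then 1 else 0) * v q') = (\<Sum>q'<s. if q' = q'' then v q'' else 0)"
          by (rule sum.cong) auto
        then have "v q'' = (\<Sum>q'<s. (if q'' = q' then 1 else 0) * v q')" using that by simp
        also have "\<dots> = (\<Sum>q'<s. mat_mult s Qi Qm q'' q' * v q')"
          using Qi that by (intro sum.cong refl) simp
        also have "\<dots> = (\<Sum>q'<s. \<Sum>q<s. Qi q'' q * Qm q q' * v q')"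
          unfolding mat_mult_def by (simp add: sum_distrib_right)
        also have "\<dots> = (\<Sum>q<s. \<Sum>q'<s. Qi q'' q * Qm q q' * v q')" by (rule sum.swap)
        also have "\<dots> = (\<Sum>q<s. Qi q'' q * (\<Sum>q'<s. Qm q q' * v q'))"
          by (simp add: sum_distrib_left mult.assoc)
        also have "\<dots> = 0" using y0 by (simp add: Qv)
        finally show ?thesis .
      qed
      show "\<forall>j<cnt i. x j = 0"
      proof (intro allI impI)
        fix j assume j: "j < cnt i"
        have "en i j \<in> ZZ i" using enZ j by blast
        moreover have "inv_into {..<cnt i} (en i) (en i j) = j"
          using bij_betw_inv_into_left[OF bij] j by simp
        ultimately have "en i j \<in> ZZ i" "inv_into {..<cnt i} (en i) (en i j) = j" by auto
        then have "v (en i j) = x j" unfolding v_def by simp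
        then show "x j = 0" using v0 enlt[OF j] unfolding s_def by simp
      qed
    qed
  qed
  have cntb: "n - t \<le> (\<Sum>i<l. cnt i)"
  proof -
    have "(\<Sum>i<l. nn i) \<le> (\<Sum>i<l. (nn i - snf_rank R (\<lambda>j. e i j) (nn i)) + snf_rank R (\<lambda>j. e i j) (nn i))"
      by (rule sum_mono) simp
    also have "\<dots> = (\<Sum>i<l. nn i - snf_rank R (\<lambda>j. e i j) (nn i)) + sum_rank_wt R l nn e"
      unfolding sum_rank_wt_def by (rule sum.distrib)
    also have "\<dots> \<le> (\<Sum>i<l. cnt i) + t"
    proof -
      have "(\<Sum>i<l. nn i - snf_rank R (\<lambda>j. e i j) (nn i)) \<le> (\<Sum>i<l. cnt i)"
        by (rule sum_mono) (simp add: cnt_def ZZc)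
      moreover have "sum_rank_wt R l nn e \<le> t" using wt unfolding t_def n_def by simp
      ultimately show ?thesis by linarith
    qed
    finally show ?thesis unfolding n_def by linarith
  qed
  have tt: "2 * t \<le> n - k" unfolding t_def by simp
  have "degree G < (\<Sum>i<l. cnt i)" using degG cntb tt k_pos nk by linarith
  then show "G = 0" by (rule B.RB[OF indeps roots])
  qed
  then show ?thesis using Ff unfolding G_def by simp
qed

end
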